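(* Let $F:\{0,1\}^n\to\mathbb{F}^E_m\cap[0,1]$ be a finite-precision CDF over a binary number format $\mathcal{B}=(n,\gamma_{\mathcal{B}},\phi_{\mathcal{B}})$. The expected number of fair random bits drawn by the procedure $\textsc{Opt}(F)$ described in the context is at most $m+2-2^{-2^{E-1}+3}$.
   Context: $\overline{\mathbb{R}}=\mathbb{R}\cup\{-\infty,+\infty,\bot\}$ is totally ordered by $-\infty<$ reals $<+\infty<\bot$. A binary number format $\mathcal{B}=(n,\gamma_{\mathcal{B}},\phi_{\mathcal{B}})$ consists of $n\ge1$, $\gamma_{\mathcal{B}}:\{0,1\}^n\to\overline{\mathbb{R}}$, and a bijection $\phi_{\mathcal{B}}$ of $\{0,1\}^n$ with $b<_{\mathrm{dict}}b'\Rightarrow\gamma_{\mathcal{B}}(\phi_{\mathcal{B}}(b))\le\gamma_{\mathcal{B}}(\phi_{\mathcal{B}}(b'))$; it induces the order $b<_{\mathcal{B}}b'$ iff $\phi_{\mathcal{B}}^{-1}(b)<_{\mathrm{dict}}\phi_{\mathcal{B}}^{-1}(b')$. $\mathbb{F}^E_m\cap[0,1]$ is the set of reals in $[0,1]$ representable as IEEE-754-style floating-point numbers with $E$ exponent and $m$ mantissa bits. A finite-precision CDF over $\mathcal{B}$ is $F:\{0,1\}^n\to\mathbb{F}^E_m\cap[0,1]$ with $F(\phi_{\mathcal{B}}(1^n))=1$ and $b<_{\mathcal{B}}b'\Rightarrow F(b)\le F(b')$. For $z\in[0,1]$ with concise binary expansion $(z_0.z_1z_2\ldots)_2$ write $[z]_j=z_j$.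 $\textsc{Opt}(F,b,\ell,f_0,f_1)$, called initially as $\textsc{Opt}(F,\varepsilon,0,0,1)$: if $|b|=n$ return $\phi_{\mathcal{B}}(b)$. Let $f_2=F(\phi_{\mathcal{B}}(b\,0\,1^{n-|b|-1}))$. If $f_2=f_1$ return $\textsc{Opt}(F,b0,\ell,f_0,f_2)$; if $f_2=f_0$ return $\textsc{Opt}(F,b1,\ell,f_2,f_1)$. Let $a_0(j)=[f_2-f_0]_j$, $a_1(j)=[f_1-f_2]_j$ (exact real differences). If $\ell>0$: if $a_0(\ell)=1,a_1(\ell)=0$ return $\textsc{Opt}(F,b0,\ell,f_0,f_2)$; if $a_0(\ell)=0,a_1(\ell)=1$ return $\textsc{Opt}(F,b1,\ell,f_2,f_1)$. Then repeat: draw a fair random bit $x$, set $\ell\leftarrow\ell+1$; if $x=0$ and $a_0(\ell)=1$ return $\textsc{Opt}(F,b0,\ell,f_0,f_2)$; if $x=1$ and $a_1(\ell)=1$ return $\textsc{Opt}(F,b1,\ell,f_2,f_1)$. *)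

theory Defs
  imports "HOL-Probability.Probability"
begin

datatype xreal = XNegInf | XFin real | XPosInf | XBot

fun xreal_le :: "xreal \<Rightarrow> xreal \<Rightarrow> bool" where
  "xreal_le XNegInf _ = True"
| "xreal_le (XFin x) XNegInf = False"
| "xreal_le (XFin x) (XFin y) = (x \<le> y)"
| "xreal_le (XFin x) _ = True"
| "xreal_le XPosInf XPosInf = True"
| "xreal_le XPosInf XBot = True"
| "xreal_le XPosInf _ = False"
| "xreal_le XBot y = (y = XBot)"

section \<open>Bit strings (False = 0, True = 1) and dictionary order\<close>

definition bitstrings :: "nat \<Rightarrow> bool list set" where
  "bitstrings n = {b. length b = n}"

definition dict_less :: "bool list \<Rightarrow> bool list \<Rightarrow> bool" where
  "dict_less b b' \<longleftrightarrow> length b = length b' \<and>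
     (\<exists>k < length b. take k b = take k b' \<and> \<not> b ! k \<and> b' ! k)"

definition binary_number_format ::
  "nat \<Rightarrow> (bool list \<Rightarrow> xreal) \<Rightarrow> (bool list \<Rightarrow> bool list) \<Rightarrow> bool" where
  "binary_number_format n \<gamma> \<phi> \<longleftrightarrow> n \<ge> 1 \<and>
     bij_betw \<phi> (bitstrings n) (bitstrings n) \<and>
     (\<forall>b \<in> bitstrings n. \<forall>b' \<in> bitstrings n.
        dict_less b b' \<longrightarrow> xreal_le (\<gamma> (\<phi> b)) (\<gamma> (\<phi> b')))"

definition fmt_less :: "nat \<Rightarrow> (bool list \<Rightarrow> bool list) \<Rightarrow> bool list \<Rightarrow> bool list \<Rightarrow> bool" where
  "fmt_less n \<phi> b b' \<longleftrightarrow>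
     dict_less (inv_into (bitstrings n) \<phi> b) (inv_into (bitstrings n) \<phi> b')"

section \<open>IEEE-754-style floating point numbers (nonnegative finite part)\<close>

definition fp_bias :: "nat \<Rightarrow> int" where
  "fp_bias E = 2 ^ (E - 1) - 1"

definition fp_nonneg :: "nat \<Rightarrow> nat \<Rightarrow> real set" where
  "fp_nonneg E m =
     {real f / 2 ^ m * 2 powr real_of_int (1 - fp_bias E) | f. f < 2 ^ m} \<union>
     {(1 + real f / 2 ^ m) * 2 powr real_of_int (int e - fp_bias E) | e f.
        1 \<le> e \<and> e \<le> 2 ^ E - 2 \<and> f < 2 ^ m}"

definition fp_unit :: "nat \<Rightarrow> nat \<Rightarrow> real set" where
  "fp_unit E m = fp_nonneg E m \<inter> {0..1}"

definition fp_cdf ::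
  "nat \<Rightarrow> nat \<Rightarrow> nat \<Rightarrow> (bool list \<Rightarrow> bool list) \<Rightarrow> (bool list \<Rightarrow> real) \<Rightarrow> bool" where
  "fp_cdf E m n \<phi> F \<longleftrightarrow>
     (\<forall>b \<in> bitstrings n. F b \<in> fp_unit E m) \<and>
     F (\<phi> (replicate n True)) = 1 \<and>
     (\<forall>b \<in> bitstrings n. \<forall>b' \<in> bitstrings n. fmt_less n \<phi> b b' \<longrightarrow> F b \<le> F b')"

text \<open>[z]_j for z in [0,1], concise expansion (no infinite tail of ones).\<close>
definition bin_digit :: "real \<Rightarrow> nat \<Rightarrow> bool" where
  "bin_digit z j = odd \<lfloor>z * 2 ^ j\<rfloor>"

text \<open>Given the coin stream \<omega> (the i-th drawn bit is \<omega> i, 0-indexed, True = 1),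
  the procedure is deterministic. The counter l equals the number of bits
  drawn so far, so the number of bits drawn is the final value of l
  (infinity if the procedure does not terminate). The parameter k = n - |b|.\<close>
fun opt_bits ::
  "(bool list \<Rightarrow> bool list) \<Rightarrow> (bool list \<Rightarrow> real) \<Rightarrow> (nat \<Rightarrow> bool) \<Rightarrow>
   nat \<Rightarrow> bool list \<Rightarrow> nat \<Rightarrow> real \<Rightarrow> real \<Rightarrow> enat" where
  "opt_bits \<phi> F \<omega> 0 b l f0 f1 = enat l"
| "opt_bits \<phi> F \<omega> (Suc k) b l f0 f1 =
    (let f2 = F (\<phi> (b @ [False] @ replicate k True));
         a0 = bin_digit (f2 - f0);
         a1 = bin_digit (f1 - f2);
         hit = (\<lambda>j. (\<not> \<omega> (j - 1) \<and> a0 j) \<or> (\<omega> (j - 1) \<and> a1 j))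
     in if f2 = f1 then opt_bits \<phi> F \<omega> k (b @ [False]) l f0 f2
        else if f2 = f0 then opt_bits \<phi> F \<omega> k (b @ [True]) l f2 f1
        else if l > 0 \<and> a0 l \<and> \<not> a1 l then opt_bits \<phi> F \<omega> k (b @ [False]) l f0 f2
        else if l > 0 \<and> \<not> a0 l \<and> a1 l then opt_bits \<phi> F \<omega> k (b @ [True]) l f2 f1
        else if (\<exists>j > l. hit j) then
          (let j = (LEAST j. l < j \<and> hit j) in
             if \<omega> (j - 1) then opt_bits \<phi> F \<omega> k (b @ [True]) j f2 f1
             else opt_bits \<phi> F \<omega> k (b @ [False]) j f0 f2)
        else \<infinity>)"

definition coins :: "(nat \<Rightarrow> bool) measure" where
  "coins = PiM UNIV (\<lambda>_. measure_pmf (bernoulli_pmf (1/2)))"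

definition expected_bits ::
  "nat \<Rightarrow> (bool list \<Rightarrow> bool list) \<Rightarrow> (bool list \<Rightarrow> real) \<Rightarrow> ennreal" where
  "expected_bits n \<phi> F =
     (\<integral>\<^sup>+ \<omega>. ennreal_of_enat (opt_bits \<phi> F \<omega> n [] 0 0 1) \<partial>coins)"

end

theory Submission
  imports Defs
begin


definition dg :: "nat \<Rightarrow> nat \<Rightarrow> nat \<Rightarrow> bool" where
  "dg T W j = (j \<le> T \<and> odd (W div 2 ^ (T - j)))"

definition Kc :: "nat \<Rightarrow> nat \<Rightarrow> nat \<Rightarrow> nat \<Rightarrow> bool" where
  "Kc T x y i = (2 ^ (T - i) \<le> x mod 2 ^ (T - i) + y mod 2 ^ (T - i))"

lemma fl1: "j \<le> T \<Longrightarrow> \<lfloor>real W / 2 ^ T * 2 ^ j\<rfloor> = int (W div 2 ^ (T - j))"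
proof -
  assume True: "j \<le> T"
  have p: "(2::real) ^ T = 2 ^ (T - j) * 2 ^ j"
    using True by (simp flip: power_add)
  have "real W / 2 ^ T * 2 ^ j = real W / 2 ^ (T - j)"
    unfolding p by simp
  moreover have "\<lfloor>real W / 2 ^ (T - j)\<rfloor> = int (W div 2 ^ (T - j))"
    using floor_divide_of_nat_eq[of W "2 ^ (T - j)"] by (simp only: of_nat_power of_nat_numeral)
  ultimately show "\<lfloor>real W / 2 ^ T * 2 ^ j\<rfloor> = int (W div 2 ^ (T - j))"
    by simp
qed

lemma fl2: "T < j \<Longrightarrow> \<lfloor>real W / 2 ^ T * 2 ^ j\<rfloor> = int W * 2 * 2 ^ (j - Suc T)"
proof -
  assume "T < j"
  then have p: "(2::real) ^ j = 2 ^ T * 2 * 2 ^ (j - Suc T)"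
  proof -
    have "j = T + 1 + (j - Suc T)" using \<open>T < j\<close> by simp
    then show ?thesis by (metis power_add power_one_right)
  qed
  have "real W / 2 ^ T * 2 ^ j = real W * 2 * 2 ^ (j - Suc T)"
    unfolding p by simp
  also have "\<dots> = real_of_int (int W * 2 * 2 ^ (j - Suc T))" by simp
  finally show ?thesis by (simp only: floor_of_int)
qed

lemma bin_digit_nat: "bin_digit (real W / 2 ^ T) j = dg T W j"
proof (cases "j \<le> T")
  case True
  then show ?thesis using fl1[OF True, of W] unfolding bin_digit_def dg_def
    by (simp only: even_of_nat_iff) simp
next
  case False
  then show ?thesis using fl2[of T j W] unfolding bin_digit_def dg_def
    by simp
qed
lemma dg_gt: "T < j \<Longrightarrow> \<not> dg T W j"
  by (simp add: dg_def)

lemma div_add_carry: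
  fixes x y M :: nat
  assumes "0 < M"
  shows "(x + y) div M = x div M + y div M + (if M \<le> x mod M + y mod M then 1 else 0)"
proof -
  have "(x + y) div M = x div M + y div M + (x mod M + y mod M) div M"
    by (rule div_add1_eq)
  moreover have "(x mod M + y mod M) div M = (if M \<le> x mod M + y mod M then 1 else 0)"
  proof -
    have a: "x mod M < M" "y mod M < M" using assms by auto
    show ?thesis
    proof (cases "M \<le> x mod M + y mod M")
      case True
      then have "(x mod M + y mod M) div M = Suc ((x mod M + y mod M - M) div M)"
        using assms by (simp add: le_div_geq)
      moreover have "x mod M + y mod M - M < M" using a by linarith
      then have "(x mod M + y mod M - M) div M = 0" by simp
      ultimately show ?thesis using True by simp
    next
      case False
      then show ?thesis by simp
    qed
  qed
  ultimately show ?thesis by simp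
qed

lemma K1:
  assumes "i \<le> T"
  shows "dg T (x + y) i = (dg T x i \<noteq> (dg T y i \<noteq> Kc T x y i))"
  using div_add_carry[of "2 ^ (T - i)" x y] assms
  by (auto simp: dg_def Kc_def)

lemma K3: "\<not> Kc T x y T"
  by (simp add: Kc_def)

lemma K2_arith:
  fixes a b M' :: nat
  assumes "a < M'" "b < M'"
  shows "(2 * M' \<le> a + b + M' * (if p then 1 else 0) + M' * (if q then 1 else 0)) =
     (2 \<le> (if p then 1 else 0) + (if q then 1 else 0) + (if M' \<le> a + b then 1 else (0::nat)))"
  using assms by (cases p; cases q) auto

lemma K2:
  assumes "i < T"
  shows "Kc T x y i = (2 \<le> (if dg T x (Suc i) then 1 else 0) + (if dg T y (Suc i) then 1 else 0)
                          + (if Kc T x y (Suc i) then 1 else (0::nat)))"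
proof -
  define M' :: nat where "M' = 2 ^ (T - Suc i)"
  have Ti: "T - i = Suc (T - Suc i)" using assms by simp
  have M: "2 ^ (T - i) = 2 * M'"
    unfolding M'_def Ti by (rule power_Suc)
  have M'pos: "0 < M'" unfolding M'_def by simp
  have xm: "x mod (2 * M') = x mod M' + M' * (x div M' mod 2)"
    using mod_mult2_eq[of x M' 2] by (simp only: mult.commute add.commute)
  have ym: "y mod (2 * M') = y mod M' + M' * (y div M' mod 2)"
    using mod_mult2_eq[of y M' 2] by (simp only: mult.commute add.commute)
  have a: "x mod M' < M'" "y mod M' < M'" using M'pos by auto
  have dx: "dg T x (Suc i) = odd (x div M')" "dg T y (Suc i) = odd (y div M')"
    using assms by (auto simp: dg_def M'_def)
  have k': "Kc T x y (Suc i) = (M' \<le> x mod M' + y mod M')"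
    by (simp add: Kc_def M'_def)
  have "Kc T x y i = (2 * M' \<le> x mod (2 * M') + y mod (2 * M'))"
    by (simp add: Kc_def M)
  also have "\<dots> = (2 * M' \<le> x mod M' + y mod M' + M' * (x div M' mod 2) + M' * (y div M' mod 2))"
    unfolding xm ym by (simp add: algebra_simps)
  finally have kk: "Kc T x y i = (2 * M' \<le> x mod M' + y mod M' + M' * (x div M' mod 2) + M' * (y div M' mod 2))" .
  have e1: "x div M' mod 2 = (if dg T x (Suc i) then 1 else 0)"
    unfolding dx by (auto simp: odd_iff_mod_2_eq_one)
  have e2: "y div M' mod 2 = (if dg T y (Suc i) then 1 else 0)"
    unfolding dx by (auto simp: odd_iff_mod_2_eq_one)
  show ?thesis
    unfolding kk e1 e2 k' using K2_arith[OF a] by simp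
qed

lemma chain:
  assumes "Kc T x y i"
  shows "\<exists>j>i. dg T x j \<and> dg T y j \<and> (\<forall>i'. i < i' \<and> i' < j \<longrightarrow> dg T x i' \<noteq> dg T y i' \<and> Kc T x y i')"
  using assms
proof (induction "T - i" arbitrary: i)
  case 0
  then have "i \<ge> T" by simp
  then have "Kc T x y i = Kc T x y T" by (simp add: Kc_def)
  with 0 K3 show ?case by simp
next
  case (Suc d)
  then have iT: "i < T" by simp
  note k = K2[OF iT, of x y]
  show ?case
  proof (cases "dg T x (Suc i) \<and> dg T y (Suc i)")
    case True
    then show ?thesis by (intro exI[of _ "Suc i"]) auto
  next
    case False
    with k Suc.prems have ne: "dg T x (Suc i) \<noteq> dg T y (Suc i)" and ks: "Kc T x y (Suc i)"
      by (auto split: if_splits)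
    have dd: "d = T - Suc i" using Suc.hyps(2) by simp
    from Suc.hyps(1)[OF dd ks] obtain j where
      j: "j > Suc i" "dg T x j" "dg T y j"
        "\<forall>i'. Suc i < i' \<and> i' < j \<longrightarrow> dg T x i' \<noteq> dg T y i' \<and> Kc T x y i'"
      by auto
    have "\<forall>i'. i < i' \<and> i' < j \<longrightarrow> dg T x i' \<noteq> dg T y i' \<and> Kc T x y i'"
    proof (intro allI impI)
      fix i' assume "i < i' \<and> i' < j"
      then show "dg T x i' \<noteq> dg T y i' \<and> Kc T x y i'"
        using j(4) ne ks by (cases "i' = Suc i") auto
    qed
    then show ?thesis using j by (intro exI[of _ j]) auto
  qed
qed



definition hitf :: "(nat \<Rightarrow> bool) \<Rightarrow> (nat \<Rightarrow> bool) \<Rightarrow> (nat \<Rightarrow> bool) \<Rightarrow> nat \<Rightarrow> bool" where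
  "hitf \<omega> a0 a1 j = ((\<not> \<omega> (j - 1) \<and> a0 j) \<or> (\<omega> (j - 1) \<and> a1 j))"

lemma opt_Suc:
  assumes "f2 = F (\<phi> (b @ [False] @ replicate k True))" "a0 = bin_digit (f2 - f0)" "a1 = bin_digit (f1 - f2)"
  shows "opt_bits \<phi> F \<omega> (Suc k) b l f0 f1 =
     (if f2 = f1 then opt_bits \<phi> F \<omega> k (b @ [False]) l f0 f2
        else if f2 = f0 then opt_bits \<phi> F \<omega> k (b @ [True]) l f2 f1
        else if l > 0 \<and> a0 l \<and> \<not> a1 l then opt_bits \<phi> F \<omega> k (b @ [False]) l f0 f2
        else if l > 0 \<and> \<not> a0 l \<and> a1 l then opt_bits \<phi> F \<omega> k (b @ [True]) l f2 f1
        else if (\<exists>j > l. hitf \<omega> a0 a1 j) then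
             (if \<omega> ((LEAST j. l < j \<and> hitf \<omega> a0 a1 j) - 1)
              then opt_bits \<phi> F \<omega> k (b @ [True]) (LEAST j. l < j \<and> hitf \<omega> a0 a1 j) f2 f1
              else opt_bits \<phi> F \<omega> k (b @ [False]) (LEAST j. l < j \<and> hitf \<omega> a0 a1 j) f0 f2)
        else \<infinity>)"
  unfolding assms hitf_def by (simp only: opt_bits.simps Let_def)

lemma opt_local:
  "(\<forall>i\<ge>l. \<omega> i = \<omega>' i) \<Longrightarrow> opt_bits \<phi> F \<omega> k b l f0 f1 = opt_bits \<phi> F \<omega>' k b l f0 f1"
proof (induction k arbitrary: b l f0 f1)
  case 0
  then show ?case by simp
next
  case (Suc k)
  define f2 where "f2 = F (\<phi> (b @ [False] @ replicate k True))"
  define a0 where "a0 = bin_digit (f2 - f0)"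
  define a1 where "a1 = bin_digit (f1 - f2)"
  note e1 = opt_Suc[where F=F and \<phi>=\<phi> and b=b and k=k, OF f2_def a0_def a1_def, of \<omega>]
  note e2 = opt_Suc[where F=F and \<phi>=\<phi> and b=b and k=k, OF f2_def a0_def a1_def, of \<omega>']
  have P: "(\<lambda>j. l < j \<and> hitf \<omega> a0 a1 j) = (\<lambda>j. l < j \<and> hitf \<omega>' a0 a1 j)"
    using Suc.prems by (auto simp: hitf_def fun_eq_iff)
  let ?J = "LEAST j. l < j \<and> hitf \<omega>' a0 a1 j"
  have lj: "l < ?J" if "\<exists>j > l. hitf \<omega>' a0 a1 j"
    using that by (metis (mono_tags, lifting) LeastI)
  have w: "\<omega> (?J - 1) = \<omega>' (?J - 1)" if "\<exists>j > l. hitf \<omega>' a0 a1 j"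
    using lj[OF that] Suc.prems by auto
  have I3: "opt_bits \<phi> F \<omega> k b' ?J g0 g1 = opt_bits \<phi> F \<omega>' k b' ?J g0 g1"
    if "\<exists>j > l. hitf \<omega>' a0 a1 j" for b' g0 g1
    using lj[OF that] Suc.prems by (intro Suc.IH) auto
  have I1: "opt_bits \<phi> F \<omega> k b' l g0 g1 = opt_bits \<phi> F \<omega>' k b' l g0 g1" for b' g0 g1
    using Suc.prems by (intro Suc.IH) auto
  have ex: "(\<exists>j > l. hitf \<omega> a0 a1 j) = (\<exists>j > l. hitf \<omega>' a0 a1 j)"
    using P by (metis (mono_tags, lifting))
  have le: "(LEAST j. l < j \<and> hitf \<omega> a0 a1 j) = ?J"
    using P by simp
  show ?case
  proof (cases "f2 = f1")
    case True
    then show ?thesis unfolding e1 e2 using I1 by simp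
  next
    case n1: False
    show ?thesis
  proof (cases "f2 = f0")
    case True
    then show ?thesis unfolding e1 e2 using n1 I1 by simp
  next
    case n2: False
    show ?thesis
  proof (cases "l > 0 \<and> a0 l \<and> \<not> a1 l")
    case True
    then show ?thesis unfolding e1 e2 using n1 n2 I1 by simp
  next
    case n3: False
    show ?thesis
  proof (cases "l > 0 \<and> \<not> a0 l \<and> a1 l")
    case True
    then show ?thesis unfolding e1 e2 using n1 n2 n3 I1 by simp
  next
    case n4: False
    have nc: "f2 \<noteq> f1" "f2 \<noteq> f0" "\<not> (l > 0 \<and> a0 l \<and> \<not> a1 l)" "\<not> (l > 0 \<and> \<not> a0 l \<and> a1 l)"
      using n1 n2 n3 n4 by auto
    show ?thesis
    proof (cases "\<exists>j > l. hitf \<omega>' a0 a1 j")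
      case True
      then show ?thesis unfolding e1 e2 ex le using nc w[OF True] I3[OF True]
        by (simp only: if_False if_True)
    next
      case False
      then show ?thesis unfolding e1 e2 ex le using nc by (simp only: if_False if_True)
    qed
  qed
  qed
  qed
  qed
qed



lemma dict_less_split:
  assumes "length x = length y"
  shows "dict_less (p @ False # x) (p @ True # y)"
  unfolding dict_less_def using assms
  by (intro conjI exI[of _ "length p"]) (auto simp: nth_append)

lemma dict_rep:
  "length c = k \<Longrightarrow> c \<noteq> replicate k True \<Longrightarrow> dict_less (p @ c) (p @ replicate k True)"
proof (induction c arbitrary: p k)
  case Nil
  then show ?case by simp
next
  case (Cons a c)
  then obtain k' where k: "k = Suc k'" by (cases k) auto
  show ?case
  proof (cases a)
    case True
    with Cons k have "c \<noteq> replicate k' True" "length c = k'" by auto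
    from Cons.IH[OF this(2) this(1), of "p @ [True]"] show ?thesis
      using True k by simp
  next
    case False
    then show ?thesis using dict_less_split[of c "replicate k' True" p] Cons.prems k by simp
  qed
qed


lemma carry_case:
  assumes "0 < x" "0 < y" "x + y \<le> 2 ^ T" "dg T (x + y) l"
    "\<not> (l > 0 \<and> dg T x l \<and> \<not> dg T y l)" "\<not> (l > 0 \<and> \<not> dg T x l \<and> dg T y l)"
  shows "Kc T x y l"
proof -
  have lT: "l \<le> T" using assms(4) by (simp add: dg_def)
  have k1: "dg T (x + y) l = (dg T x l \<noteq> (dg T y l \<noteq> Kc T x y l))" using K1[OF lT] .
  show ?thesis
  proof (cases "l = 0")
    case True
    have "x < 2 ^ T" "y < 2 ^ T" using assms(1-3) by auto
    then have "\<not> dg T x 0" "\<not> dg T y 0" by (auto simp: dg_def)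
    then show ?thesis using k1 assms(4) True by auto
  next
    case False
    then show ?thesis using k1 assms(4-6) by auto
  qed
qed

definition Jf :: "nat \<Rightarrow> nat \<Rightarrow> nat \<Rightarrow> nat \<Rightarrow> nat" where
  "Jf T x y l = (LEAST j. l < j \<and> dg T x j \<and> dg T y j)"

lemma Jf_props:
  assumes "Kc T x y l"
  shows "l < Jf T x y l" "dg T x (Jf T x y l)" "dg T y (Jf T x y l)" "Jf T x y l \<le> T"
    "\<And>i. l < i \<Longrightarrow> i < Jf T x y l \<Longrightarrow> dg T x i \<noteq> dg T y i \<and> Kc T x y i"
proof -
  obtain j where j: "j > l" "dg T x j" "dg T y j"
    "\<forall>i'. l < i' \<and> i' < j \<longrightarrow> dg T x i' \<noteq> dg T y i' \<and> Kc T x y i'"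
    using chain[OF assms] by blast
  have le: "Jf T x y l \<le> j" unfolding Jf_def
    by (rule Least_le) (use j(1-3) in blast)
  have P: "l < Jf T x y l \<and> dg T x (Jf T x y l) \<and> dg T y (Jf T x y l)"
    unfolding Jf_def by (rule LeastI[where k=j]) (use j(1-3) in blast)
  have eq: "Jf T x y l = j"
  proof (rule ccontr)
    assume "Jf T x y l \<noteq> j"
    then have "Jf T x y l < j" using le by simp
    then have "dg T x (Jf T x y l) \<noteq> dg T y (Jf T x y l)" using j(4) P by blast
    then show False using P by blast
  qed
  show "l < Jf T x y l" "dg T x (Jf T x y l)" "dg T y (Jf T x y l)" using P by blast+
  show "Jf T x y l \<le> T" using P by (simp add: dg_def)
  fix i assume "l < i" "i < Jf T x y l"
  then show "dg T x i \<noteq> dg T y i \<and> Kc T x y i"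
    using j(4) eq by blast
qed

lemma zero_between:
  assumes "Kc T x y l" "l < i" "i < Jf T x y l"
  shows "\<not> dg T (x + y) i"
proof -
  have iT: "i \<le> T" using Jf_props(4)[OF assms(1)] assms(3) by simp
  show ?thesis using Jf_props(5)[OF assms] K1[OF iT, of x y] by auto
qed

lemma hit_J:
  assumes "Kc T x y l"
  shows "hitf \<omega> (dg T x) (dg T y) (Jf T x y l)"
  using Jf_props(2,3)[OF assms] by (auto simp: hitf_def)

lemma hit_between:
  assumes "Kc T x y l" "l < i" "i < Jf T x y l"
  shows "hitf \<omega> (dg T x) (dg T y) i = (\<omega> (i - 1) \<noteq> dg T x i)"
  using Jf_props(5)[OF assms] by (auto simp: hitf_def)

lemma least_hit:
  fixes \<omega> :: "nat \<Rightarrow> bool"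
  assumes "Kc T x y l"
  defines "j \<equiv> LEAST j. l < j \<and> hitf \<omega> (dg T x) (dg T y) j"
  shows "l < j" "j \<le> Jf T x y l" "hitf \<omega> (dg T x) (dg T y) j"
    "\<And>i. l < i \<Longrightarrow> i < j \<Longrightarrow> \<omega> (i - 1) = dg T x i"
proof -
  have h: "l < Jf T x y l \<and> hitf \<omega> (dg T x) (dg T y) (Jf T x y l)"
    using Jf_props(1)[OF assms(1)] hit_J[OF assms(1)] by auto
  show "j \<le> Jf T x y l" unfolding j_def using h by (rule Least_le)
  have "l < j \<and> hitf \<omega> (dg T x) (dg T y) j" unfolding j_def using h by (rule LeastI)
  then show "l < j" "hitf \<omega> (dg T x) (dg T y) j" by auto
  fix i assume i: "l < i" "i < j"
  then have "\<not> hitf \<omega> (dg T x) (dg T y) i" unfolding j_def using not_less_Least by blast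
  moreover have "i < Jf T x y l" using i \<open>j \<le> Jf T x y l\<close> by simp
  ultimately show "\<omega> (i - 1) = dg T x i" using hit_between[OF assms(1) i(1)] by auto
qed

definition Pv :: "nat \<Rightarrow> nat \<Rightarrow> nat \<Rightarrow> bool" where
  "Pv m T v = (\<forall>r\<le>T. \<not> 2 ^ r dvd v \<longrightarrow> v < 2 ^ (m + r))"

locale omodel =
  fixes \<phi> :: "bool list \<Rightarrow> bool list" and F :: "bool list \<Rightarrow> real" and n T m :: nat
    and G :: "bool list \<Rightarrow> nat"
  assumes FG: "length c = n \<Longrightarrow> F (\<phi> c) = real (G c) / 2 ^ T"
    and G_le: "length c = n \<Longrightarrow> G c \<le> 2 ^ T"
    and G_mono: "length c = n \<Longrightarrow> length c' = n \<Longrightarrow> dict_less c c' \<Longrightarrow> G c \<le> G c'"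
    and G_P: "length c = n \<Longrightarrow> Pv m T (G c)"
    and G_top: "G (replicate n True) = 2 ^ T"
begin

definition inv :: "nat \<Rightarrow> bool list \<Rightarrow> nat \<Rightarrow> nat \<Rightarrow> bool" where
  "inv k b v0 v1 \<longleftrightarrow> length b + k = n \<and> v1 = G (b @ replicate k True) \<and>
     (\<forall>c. length c = k \<longrightarrow> v0 \<le> G (b @ c)) \<and> Pv m T v0"

definition spl :: "nat \<Rightarrow> bool list \<Rightarrow> nat" where
  "spl k b = G (b @ [False] @ replicate k True)"

lemma G_rep: "length b + k = n \<Longrightarrow> length c = k \<Longrightarrow> G (b @ c) \<le> G (b @ replicate k True)"
  using G_mono[of "b @ c" "b @ replicate k True"] dict_rep[of c k b] by fastforce

lemma inv_le: "inv k b v0 v1 \<Longrightarrow> v0 \<le> v1"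
  unfolding inv_def by auto

lemma inv_top: "inv k b v0 v1 \<Longrightarrow> v1 \<le> 2 ^ T"
  unfolding inv_def using G_le by auto

lemma inv_P1: "inv k b v0 v1 \<Longrightarrow> Pv m T v1"
  unfolding inv_def using G_P by auto

lemma inv_P0: "inv k b v0 v1 \<Longrightarrow> Pv m T v0"
  unfolding inv_def by auto

lemma inv_step:
  assumes "inv (Suc k) b v0 v1"
  shows "v0 \<le> spl k b" "spl k b \<le> v1" "inv k (b @ [False]) v0 (spl k b)" "inv k (b @ [True]) (spl k b) v1"
    "F (\<phi> (b @ [False] @ replicate k True)) = real (spl k b) / 2 ^ T"
proof -
  have len: "length b + Suc k = n" and v1: "v1 = G (b @ replicate (Suc k) True)"
    and v0: "\<And>c. length c = Suc k \<Longrightarrow> v0 \<le> G (b @ c)" and P0: "Pv m T v0"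
    using assms unfolding inv_def by auto
  show s0: "v0 \<le> spl k b" unfolding spl_def using v0[of "False # replicate k True"] by simp
  have "G (b @ False # replicate k True) \<le> G (b @ True # replicate k True)"
    using G_mono[of "b @ False # replicate k True" "b @ True # replicate k True"] len
      dict_less_split[of "replicate k True" "replicate k True" b] by simp
  then show "spl k b \<le> v1" unfolding spl_def v1 by (simp add: replicate_append_same[symmetric])
  show "inv k (b @ [False]) v0 (spl k b)"
    unfolding inv_def spl_def using len P0 v0 by auto
  show "inv k (b @ [True]) (spl k b) v1"
    unfolding inv_def
  proof (intro conjI allI impI)
    show "length (b @ [True]) + k = n" using len by simp
    show "v1 = G ((b @ [True]) @ replicate k True)" using v1 by (simp add: replicate_append_same[symmetric])
    show "Pv m T (spl k b)" unfolding spl_def using G_P len by simp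
    fix c :: "bool list" assume "length c = k"
    then show "spl k b \<le> G ((b @ [True]) @ c)"
      unfolding spl_def using G_mono[of "b @ False # replicate k True" "b @ True # c"] len
        dict_less_split[of "replicate k True" c b] by simp
  qed
  show "F (\<phi> (b @ [False] @ replicate k True)) = real (spl k b) / 2 ^ T"
    unfolding spl_def using FG len by simp
qed

lemma sub_digit: "a \<le> b \<Longrightarrow> bin_digit (real b / 2 ^ T - real a / 2 ^ T) = dg T (b - a)"
proof -
  assume "a \<le> b"
  then have "real b / 2 ^ T - real a / 2 ^ T = real (b - a) / 2 ^ T"
    by (simp add: of_nat_diff diff_divide_distrib)
  then show ?thesis by (simp add: bin_digit_nat fun_eq_iff)
qed

lemma opt_SucI:
  assumes "inv (Suc k) b v0 v1"
  shows "opt_bits \<phi> F \<omega> (Suc k) b l (real v0 / 2 ^ T) (real v1 / 2 ^ T) =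
     (if spl k b = v1 then opt_bits \<phi> F \<omega> k (b @ [False]) l (real v0 / 2 ^ T) (real (spl k b) / 2 ^ T)
      else if spl k b = v0 then opt_bits \<phi> F \<omega> k (b @ [True]) l (real (spl k b) / 2 ^ T) (real v1 / 2 ^ T)
      else if l > 0 \<and> dg T (spl k b - v0) l \<and> \<not> dg T (v1 - spl k b) l
        then opt_bits \<phi> F \<omega> k (b @ [False]) l (real v0 / 2 ^ T) (real (spl k b) / 2 ^ T)
      else if l > 0 \<and> \<not> dg T (spl k b - v0) l \<and> dg T (v1 - spl k b) l
        then opt_bits \<phi> F \<omega> k (b @ [True]) l (real (spl k b) / 2 ^ T) (real v1 / 2 ^ T)
      else if (\<exists>j > l. hitf \<omega> (dg T (spl k b - v0)) (dg T (v1 - spl k b)) j) then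
        (if \<omega> ((LEAST j. l < j \<and> hitf \<omega> (dg T (spl k b - v0)) (dg T (v1 - spl k b)) j) - 1)
         then opt_bits \<phi> F \<omega> k (b @ [True]) (LEAST j. l < j \<and> hitf \<omega> (dg T (spl k b - v0)) (dg T (v1 - spl k b)) j)
                (real (spl k b) / 2 ^ T) (real v1 / 2 ^ T)
         else opt_bits \<phi> F \<omega> k (b @ [False]) (LEAST j. l < j \<and> hitf \<omega> (dg T (spl k b - v0)) (dg T (v1 - spl k b)) j)
                (real v0 / 2 ^ T) (real (spl k b) / 2 ^ T))
      else \<infinity>)"
proof -
  note st = inv_step[OF assms]
  have a0: "bin_digit (real (spl k b) / 2 ^ T - real v0 / 2 ^ T) = dg T (spl k b - v0)"
    using st(1) by (rule sub_digit)
  have a1: "bin_digit (real v1 / 2 ^ T - real (spl k b) / 2 ^ T) = dg T (v1 - spl k b)"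
    using st(2) by (rule sub_digit)
  have e1: "(real (spl k b) / 2 ^ T = real v1 / 2 ^ T) = (spl k b = v1)" by simp
  have e0: "(real (spl k b) / 2 ^ T = real v0 / 2 ^ T) = (spl k b = v0)" by simp
  show ?thesis
    using opt_Suc[where F=F and \<phi>=\<phi> and b=b and k=k, OF st(5)[symmetric] a0[symmetric] a1[symmetric], of \<omega> l]
    unfolding e1 e0 .
qed

lemma opt_T:
  assumes "inv k b v0 v1" "dg T (v1 - v0) l" "\<forall>i<T. \<omega> i = \<omega>' i"
  shows "opt_bits \<phi> F \<omega>' k b l (real v0 / 2 ^ T) (real v1 / 2 ^ T) =
           opt_bits \<phi> F \<omega> k b l (real v0 / 2 ^ T) (real v1 / 2 ^ T) \<and>
         opt_bits \<phi> F \<omega> k b l (real v0 / 2 ^ T) (real v1 / 2 ^ T) \<le> enat T"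
  using assms(1,2)
proof (induction k arbitrary: b l v0 v1)
  case 0
  then show ?case by (simp add: dg_def)
next
  case (Suc k)
  define s where "s = spl k b"
  note st = inv_step[OF Suc.prems(1), folded s_def]
  note e = opt_SucI[OF Suc.prems(1), of \<omega> l, folded s_def]
  note e' = opt_SucI[OF Suc.prems(1), of \<omega>' l, folded s_def]
  show ?case
  proof (cases "s = v1")
    case True
    then show ?thesis unfolding e e' using Suc.IH[OF st(3)] Suc.prems(2) by simp
  next
    case n1: False
    show ?thesis
  proof (cases "s = v0")
    case True
    then show ?thesis unfolding e e' using n1 Suc.IH[OF st(4)] Suc.prems(2) by simp
  next
    case n2: False
    show ?thesis
  proof (cases "l > 0 \<and> dg T (s - v0) l \<and> \<not> dg T (v1 - s) l")
    case True
    then show ?thesis unfolding e e' using n1 n2 Suc.IH[OF st(3)] by simp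
  next
    case n3: False
    show ?thesis
  proof (cases "l > 0 \<and> \<not> dg T (s - v0) l \<and> dg T (v1 - s) l")
    case True
    then show ?thesis unfolding e e' using n1 n2 n3 Suc.IH[OF st(4)] by simp
  next
    case n4: False
    define x where "x = s - v0"
    define y where "y = v1 - s"
    have xy: "0 < x" "0 < y" "x + y = v1 - v0" using st(1,2) n1 n2 unfolding x_def y_def by auto
    have K: "Kc T x y l"
      using carry_case[of x y T l] xy n3 n4 Suc.prems(2) inv_top[OF Suc.prems(1)]
      unfolding x_def y_def by auto
    define j1 where "j1 = (LEAST j. l < j \<and> hitf \<omega> (dg T x) (dg T y) j)"
    define j2 where "j2 = (LEAST j. l < j \<and> hitf \<omega>' (dg T x) (dg T y) j)"
    note h1 = least_hit[OF K, where \<omega>=\<omega>, folded j1_def]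
    note h2 = least_hit[OF K, where \<omega>=\<omega>', folded j2_def]
    have JT: "Jf T x y l \<le> T" by (rule Jf_props(4)[OF K])
    have hh: "hitf \<omega> (dg T x) (dg T y) j = hitf \<omega>' (dg T x) (dg T y) j" if "0 < j" "j \<le> T" for j
      using that assms(3) by (simp add: hitf_def)
    have "j2 \<le> j1" unfolding j2_def
      by (rule Least_le) (use h1 hh[of j1] JT in auto)
    moreover have "j1 \<le> j2" unfolding j1_def
      by (rule Least_le) (use h2 hh[of j2] JT in auto)
    ultimately have j12: "j1 = j2" by simp
    have w: "\<omega> (j1 - 1) = \<omega>' (j1 - 1)" using h1(1,2) JT assms(3) by simp
    have ex: "\<exists>j > l. hitf \<omega> (dg T x) (dg T y) j" "\<exists>j > l. hitf \<omega>' (dg T x) (dg T y) j"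
      using h1 h2 by auto
    have nc: "s \<noteq> v1" "s \<noteq> v0" "\<not> (l > 0 \<and> dg T x l \<and> \<not> dg T y l)" "\<not> (l > 0 \<and> \<not> dg T x l \<and> dg T y l)"
      using n1 n2 n3 n4 unfolding x_def y_def by auto
    have E: "opt_bits \<phi> F \<omega> (Suc k) b l (real v0 / 2 ^ T) (real v1 / 2 ^ T) =
        (if \<omega> (j1 - 1) then opt_bits \<phi> F \<omega> k (b @ [True]) j1 (real s / 2 ^ T) (real v1 / 2 ^ T)
         else opt_bits \<phi> F \<omega> k (b @ [False]) j1 (real v0 / 2 ^ T) (real s / 2 ^ T))"
      unfolding e j1_def using nc ex unfolding x_def y_def by (simp only: if_False if_True)
    have E': "opt_bits \<phi> F \<omega>' (Suc k) b l (real v0 / 2 ^ T) (real v1 / 2 ^ T) =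
        (if \<omega>' (j1 - 1) then opt_bits \<phi> F \<omega>' k (b @ [True]) j1 (real s / 2 ^ T) (real v1 / 2 ^ T)
         else opt_bits \<phi> F \<omega>' k (b @ [False]) j1 (real v0 / 2 ^ T) (real s / 2 ^ T))"
      unfolding e' j12 j2_def using nc ex unfolding x_def y_def by (simp only: if_False if_True)
    show ?thesis
    proof (cases "\<omega> (j1 - 1)")
      case True
      then have "dg T (v1 - s) j1" using h1(3) unfolding hitf_def y_def by auto
      then show ?thesis unfolding E E' using True w Suc.IH[OF st(4)] by simp
    next
      case False
      then have "dg T (s - v0) j1" using h1(3) unfolding hitf_def x_def by auto
      then show ?thesis unfolding E E' using False w Suc.IH[OF st(3)] by simp
    qed
  qed
  qed
  qed
  qed
qed

end


definition flipc :: "nat \<Rightarrow> nat set \<Rightarrow> nat set" where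
  "flipc a S = (if a \<in> S then S - {a} else insert a S)"

lemma flip_flip: "flipc a (flipc a S) = S"
  unfolding flipc_def by auto

lemma flip_mem: "i \<in> flipc a S \<longleftrightarrow> (if i = a then i \<notin> S else i \<in> S)"
  unfolding flipc_def by auto

lemma pattern_card:
  fixes T :: nat and D :: "nat set" and Q :: "nat set set" and p :: "nat \<Rightarrow> bool"
  assumes "finite D" "D \<subseteq> {..<T}" "Q \<subseteq> Pow {..<T}"
    "\<And>S S'. S \<in> Pow {..<T} \<Longrightarrow> S' \<in> Pow {..<T} \<Longrightarrow> (\<forall>i. i \<notin> D \<longrightarrow> (i \<in> S \<longleftrightarrow> i \<in> S')) \<Longrightarrow> S \<in> Q \<Longrightarrow> S' \<in> Q"
  shows "card {S \<in> Q. \<forall>i\<in>D. (i \<in> S) = p i} * 2 ^ card D = card Q"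
  using assms
proof (induction D rule: finite_induct)
  case empty
  then show ?case by simp
next
  case (insert a D)
  have IH: "card {S \<in> Q. \<forall>i\<in>D. (i \<in> S) = p i} * 2 ^ card D = card Q"
  proof (rule insert.IH)
    show "D \<subseteq> {..<T}" using insert.prems(1) by blast
    show "Q \<subseteq> Pow {..<T}" by (rule insert.prems(2))
    fix S S' assume a: "S \<in> Pow {..<T}" "S' \<in> Pow {..<T}" "\<forall>i. i \<notin> D \<longrightarrow> (i \<in> S \<longleftrightarrow> i \<in> S')" "S \<in> Q"
    have "\<forall>i. i \<notin> insert a D \<longrightarrow> (i \<in> S \<longleftrightarrow> i \<in> S')" using a(3) by blast
    then show "S' \<in> Q" using insert.prems(3)[OF a(1,2)] a(4) by blast
  qed
  define QD where "QD = {S \<in> Q. \<forall>i\<in>D. (i \<in> S) = p i}"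
  define Q1 where "Q1 = {S \<in> QD. (a \<in> S) = p a}"
  define Q2 where "Q2 = {S \<in> QD. (a \<in> S) \<noteq> p a}"
  have aT: "a < T" using insert.prems(1) by auto
  have finQ: "finite Q" using insert.prems(2) by (rule finite_subset) simp
  have fin: "finite Q1" "finite Q2" unfolding Q1_def Q2_def QD_def using finQ by auto
  have un: "QD = Q1 \<union> Q2" "Q1 \<inter> Q2 = {}" unfolding Q1_def Q2_def by auto
  have flipQ: "flipc a S \<in> Q" if "S \<in> Q" for S
  proof -
    have "S \<in> Pow {..<T}" using that insert.prems(2) by auto
    moreover have "flipc a S \<in> Pow {..<T}" using calculation aT unfolding flipc_def by auto
    moreover have "\<forall>i. i \<notin> insert a D \<longrightarrow> (i \<in> S \<longleftrightarrow> i \<in> flipc a S)"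
      by (simp add: flip_mem)
    ultimately show ?thesis using insert.prems(3)[of S "flipc a S"] that by blast
  qed
  have bij: "bij_betw (flipc a) Q1 Q2"
  proof (rule bij_betwI[where g="flipc a"])
    show "flipc a \<in> Q1 \<rightarrow> Q2"
      unfolding Q1_def Q2_def QD_def using flipQ insert.hyps(2) by (auto simp: flip_mem split: if_splits)
    show "flipc a \<in> Q2 \<rightarrow> Q1"
      unfolding Q1_def Q2_def QD_def using flipQ insert.hyps(2) by (auto simp: flip_mem split: if_splits)
  qed (auto simp: flip_flip)
  have c2: "card Q2 = card Q1" using bij_betw_same_card[OF bij] by simp
  have cQD: "card QD = 2 * card Q1" using card_Un_disjoint[OF fin un(2)] un(1) c2 by simp
  have eq: "{S \<in> Q. \<forall>i\<in>insert a D. (i \<in> S) = p i} = Q1"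
    unfolding Q1_def QD_def by auto
  show ?case
    unfolding eq using IH cQD insert.hyps(1,2) unfolding QD_def by simp
qed



context omodel
begin

definition cnt :: "nat \<Rightarrow> nat \<Rightarrow> bool list \<Rightarrow> nat \<Rightarrow> nat \<Rightarrow> nat \<Rightarrow> nat" where
  "cnt t k b l v0 v1 = card {S \<in> Pow {..<T}.
     enat t < opt_bits \<phi> F (\<lambda>i. i \<in> S) k b l (real v0 / 2 ^ T) (real v1 / 2 ^ T)}"

lemma carry_step:
  assumes inv: "inv (Suc k) b v0 v1"
    and s: "s = spl k b" and x: "x = s - v0" and y: "y = v1 - s"
    and sv: "s \<noteq> v1" "s \<noteq> v0"
    and nd: "\<not> (l > 0 \<and> dg T x l \<and> \<not> dg T y l)" "\<not> (l > 0 \<and> \<not> dg T x l \<and> dg T y l)"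
    and K: "Kc T x y l" and lt: "l \<le> t" "t < T"
  shows "cnt t (Suc k) b l v0 v1 * 2 ^ (t - l) \<le>
     (\<Sum>p \<in> {(c, j). l < j \<and> j \<le> t \<and> j \<le> Jf T x y l \<and> dg T (if c then y else x) j}.
        cnt t k (b @ [fst p]) (snd p) (if fst p then s else v0) (if fst p then v1 else s) * 2 ^ (t - snd p))
     + (if t < Jf T x y l then 2 ^ T else 0)"
proof -
  define J where "J = Jf T x y l"
  define lo where "lo c = (if c then s else v0)" for c :: bool
  define hi where "hi c = (if c then v1 else s)" for c :: bool
  define Y where "Y c j S = opt_bits \<phi> F (\<lambda>i. i \<in> S) k (b @ [c]) j (real (lo c) / 2 ^ T) (real (hi c) / 2 ^ T)"
    for c j S
  define Ch where "Ch = {(c, j). l < j \<and> j \<le> t \<and> j \<le> J \<and> dg T (if c then y else x) j}"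
  define Q where "Q c j = {S \<in> Pow {..<T}. enat t < Y c j S}" for c j
  define pat where "pat c j i = (if i = j - 1 then c else dg T x (i + 1))" for c :: bool and j i :: nat
  define PQ where "PQ p = {S \<in> Q (fst p) (snd p). \<forall>i\<in>{l..<snd p}. (i \<in> S) = pat (fst p) (snd p) i}" for p
  define NS where "NS = {S \<in> Pow {..<T}. \<forall>i\<in>{l..<t}. (i \<in> S) = dg T x (i + 1)}"
  define A where "A = {S \<in> Pow {..<T}. enat t < opt_bits \<phi> F (\<lambda>i. i \<in> S) (Suc k) b l (real v0 / 2 ^ T) (real v1 / 2 ^ T)}"
  have cntA: "cnt t (Suc k) b l v0 v1 = card A" unfolding cnt_def A_def ..
  have finCh: "finite Ch"
  proof (rule finite_subset)
    show "Ch \<subseteq> UNIV \<times> {..t}" unfolding Ch_def by auto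
  qed simp
  have sub: "A \<subseteq> (\<Union>p\<in>Ch. PQ p) \<union> (if t < J then NS else {})"
  proof
    fix S assume SA: "S \<in> A"
    define \<omega> where "\<omega> = (\<lambda>i. i \<in> S)"
    define js where "js = (LEAST j. l < j \<and> hitf \<omega> (dg T x) (dg T y) j)"
    note h = least_hit[OF K, where \<omega>=\<omega>, folded js_def J_def]
    have ex: "\<exists>j > l. hitf \<omega> (dg T x) (dg T y) j" using h by auto
    note E0 = opt_SucI[OF inv, of \<omega> l]
    note E1 = E0[folded s, folded x y]
    have E: "opt_bits \<phi> F \<omega> (Suc k) b l (real v0 / 2 ^ T) (real v1 / 2 ^ T) = Y (\<omega> (js - 1)) js S"
    proof -
      have "opt_bits \<phi> F \<omega> (Suc k) b l (real v0 / 2 ^ T) (real v1 / 2 ^ T) =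
          (if \<omega> (js - 1) then opt_bits \<phi> F \<omega> k (b @ [True]) js (real s / 2 ^ T) (real v1 / 2 ^ T)
           else opt_bits \<phi> F \<omega> k (b @ [False]) js (real v0 / 2 ^ T) (real s / 2 ^ T))"
        unfolding E1 js_def using sv nd ex by (simp only: if_False if_True)
      then show ?thesis unfolding Y_def lo_def hi_def \<omega>_def by simp
    qed
    have tY: "enat t < Y (\<omega> (js - 1)) js S" using SA E unfolding A_def \<omega>_def by simp
    have SP: "S \<in> Pow {..<T}" using SA unfolding A_def by simp
    show "S \<in> (\<Union>p\<in>Ch. PQ p) \<union> (if t < J then NS else {})"
    proof (cases "js \<le> t")
      case True
      have dgc: "dg T (if \<omega> (js - 1) then y else x) js"
        using h(3) unfolding hitf_def by auto
      have inCh: "(\<omega> (js - 1), js) \<in> Ch" unfolding Ch_def using h(1,2) True dgc by auto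
      have Sq: "S \<in> Q (\<omega> (js - 1)) js" unfolding Q_def using SP tY by simp
      have Sp: "\<forall>i\<in>{l..<js}. (i \<in> S) = pat (\<omega> (js - 1)) js i"
      proof
        fix i assume i: "i \<in> {l..<js}"
        show "(i \<in> S) = pat (\<omega> (js - 1)) js i"
        proof (cases "i = js - 1")
          case True
          then show ?thesis unfolding pat_def \<omega>_def by simp
        next
          case False
          then have "l < i + 1" "i + 1 < js" using i by auto
          from h(4)[OF this] show ?thesis unfolding pat_def \<omega>_def using False by simp
        qed
      qed
      have "S \<in> PQ (\<omega> (js - 1), js)" unfolding PQ_def using Sq Sp by simp
      then show ?thesis using inCh by blast
    next
      case False
      then have tJ: "t < J" using h(2) by simp
      have "\<forall>i\<in>{l..<t}. (i \<in> S) = dg T x (i + 1)"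
      proof
        fix i assume i: "i \<in> {l..<t}"
        then have "l < i + 1" "i + 1 < js" using False by auto
        from h(4)[OF this] show "(i \<in> S) = dg T x (i + 1)" unfolding \<omega>_def by simp
      qed
      then have "S \<in> NS" unfolding NS_def using SP by simp
      then show ?thesis using tJ by simp
    qed
  qed
  have finPQ: "finite (PQ p)" for p unfolding PQ_def Q_def by auto
  have finNS: "finite NS" unfolding NS_def by auto
  have "card A \<le> card ((\<Union>p\<in>Ch. PQ p) \<union> (if t < J then NS else {}))"
    by (rule card_mono) (use finCh finPQ finNS sub in auto)
  also have "\<dots> \<le> card (\<Union>p\<in>Ch. PQ p) + card (if t < J then NS else {})"
    by (rule card_Un_le)
  also have "\<dots> \<le> (\<Sum>p\<in>Ch. card (PQ p)) + (if t < J then card NS else 0)"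
    using card_UN_le[OF finCh, of PQ] by simp
  finally have cA: "card A \<le> (\<Sum>p\<in>Ch. card (PQ p)) + (if t < J then card NS else 0)" .
  have cPQ: "card (PQ p) * 2 ^ (snd p - l) = cnt t k (b @ [fst p]) (snd p) (lo (fst p)) (hi (fst p))"
    if p: "p \<in> Ch" for p
  proof -
    obtain c j where pcj: "p = (c, j)" by (cases p)
    have jl: "l < j" "j \<le> t" using p unfolding pcj Ch_def by auto
    have "card {S \<in> Q c j. \<forall>i\<in>{l..<j}. (i \<in> S) = pat c j i} * 2 ^ card {l..<j} = card (Q c j)"
    proof (rule pattern_card)
      show "finite {l..<j}" by simp
      show "{l..<j} \<subseteq> {..<T}" using jl lt by auto
      show "Q c j \<subseteq> Pow {..<T}" unfolding Q_def by auto
      fix S S' assume a: "S \<in> Pow {..<T}" "S' \<in> Pow {..<T}"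
        "\<forall>i. i \<notin> {l..<j} \<longrightarrow> (i \<in> S) = (i \<in> S')" "S \<in> Q c j"
      have "\<forall>i\<ge>j. (i \<in> S) = (i \<in> S')" using a(3) by auto
      then have "Y c j S = Y c j S'" unfolding Y_def by (rule opt_local)
      then show "S' \<in> Q c j" using a unfolding Q_def by simp
    qed
    moreover have "card (Q c j) = cnt t k (b @ [c]) j (lo c) (hi c)"
      unfolding Q_def Y_def cnt_def ..
    ultimately show ?thesis unfolding pcj PQ_def by simp
  qed
  have cNS: "card NS * 2 ^ (t - l) = 2 ^ T"
  proof -
    have "card {S \<in> Pow {..<T}. \<forall>i\<in>{l..<t}. (i \<in> S) = dg T x (i + 1)} * 2 ^ card {l..<t} = card (Pow {..<T::nat})"
      by (rule pattern_card) (use lt in auto)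
    then show ?thesis unfolding NS_def by (simp add: card_Pow)
  qed
  have "card A * 2 ^ (t - l) \<le> ((\<Sum>p\<in>Ch. card (PQ p)) + (if t < J then card NS else 0)) * 2 ^ (t - l)"
    using cA by simp
  also have "\<dots> = (\<Sum>p\<in>Ch. card (PQ p) * 2 ^ (t - l)) + (if t < J then 2 ^ T else 0)"
    using cNS by (simp add: sum_distrib_right algebra_simps)
  also have "(\<Sum>p\<in>Ch. card (PQ p) * 2 ^ (t - l)) =
      (\<Sum>p\<in>Ch. cnt t k (b @ [fst p]) (snd p) (lo (fst p)) (hi (fst p)) * 2 ^ (t - snd p))"
  proof (rule sum.cong[OF refl])
    fix p assume p: "p \<in> Ch"
    have "l \<le> snd p" "snd p \<le> t" using p unfolding Ch_def by auto
    then have "(2::nat) ^ (t - l) = 2 ^ (snd p - l) * 2 ^ (t - snd p)"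
      by (simp flip: power_add)
    then show "card (PQ p) * 2 ^ (t - l) = cnt t k (b @ [fst p]) (snd p) (lo (fst p)) (hi (fst p)) * 2 ^ (t - snd p)"
      using cPQ[OF p] by (simp add: mult.assoc[symmetric])
  qed
  finally show ?thesis unfolding cntA Ch_def J_def lo_def hi_def by simp
qed

primrec Carry :: "nat \<Rightarrow> nat \<Rightarrow> bool list \<Rightarrow> nat \<Rightarrow> nat \<Rightarrow> nat" where
  "Carry t 0 b v0 v1 = 0"
| "Carry t (Suc k) b v0 v1 = (if Kc T (spl k b - v0) (v1 - spl k b) t then 1 else 0)
     + Carry t k (b @ [False]) v0 (spl k b) + Carry t k (b @ [True]) (spl k b) v1"

lemma cnt_branch:
  assumes inv: "inv (Suc k) b v0 v1"
  shows "spl k b = v1 \<Longrightarrow> cnt t (Suc k) b l v0 v1 = cnt t k (b @ [False]) l v0 (spl k b)"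
    and "spl k b \<noteq> v1 \<Longrightarrow> spl k b = v0 \<Longrightarrow> cnt t (Suc k) b l v0 v1 = cnt t k (b @ [True]) l (spl k b) v1"
    and "spl k b \<noteq> v1 \<Longrightarrow> spl k b \<noteq> v0 \<Longrightarrow> l > 0 \<and> dg T (spl k b - v0) l \<and> \<not> dg T (v1 - spl k b) l
         \<Longrightarrow> cnt t (Suc k) b l v0 v1 = cnt t k (b @ [False]) l v0 (spl k b)"
    and "spl k b \<noteq> v1 \<Longrightarrow> spl k b \<noteq> v0 \<Longrightarrow> \<not> (l > 0 \<and> dg T (spl k b - v0) l \<and> \<not> dg T (v1 - spl k b) l)
         \<Longrightarrow> l > 0 \<and> \<not> dg T (spl k b - v0) l \<and> dg T (v1 - spl k b) l
         \<Longrightarrow> cnt t (Suc k) b l v0 v1 = cnt t k (b @ [True]) l (spl k b) v1"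
  unfolding cnt_def opt_SucI[OF inv] by (simp_all only: if_True if_False simp_thms)

lemma sum_disj_le:
  fixes h :: "'a \<Rightarrow> nat"
  assumes "finite V" "\<And>l. l \<in> V \<Longrightarrow> ch l \<subseteq> U" "finite U"
    "\<And>l l'. l \<in> V \<Longrightarrow> l' \<in> V \<Longrightarrow> l \<noteq> l' \<Longrightarrow> ch l \<inter> ch l' = {}"
  shows "(\<Sum>l\<in>V. \<Sum>p\<in>ch l. h p) \<le> (\<Sum>p\<in>U. h p)"
proof -
  have fin: "\<And>l. l \<in> V \<Longrightarrow> finite (ch l)" using assms(2,3) finite_subset by blast
  have "(\<Sum>l\<in>V. \<Sum>p\<in>ch l. h p) = (\<Sum>p\<in>(\<Union>l\<in>V. ch l). h p)"
    by (rule sum.UNION_disjoint[symmetric]) (use assms(1,4) fin in auto)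
  also have "\<dots> \<le> (\<Sum>p\<in>U. h p)"
    by (rule sum_mono2) (use assms(2,3) in auto)
  finally show ?thesis .
qed

lemma sum_pairs:
  fixes h :: "bool \<times> nat \<Rightarrow> nat"
  assumes "finite A0" "finite A1"
  shows "(\<Sum>p\<in>{(c, j). if c then j \<in> A1 else j \<in> A0}. h p) = (\<Sum>j\<in>A0. h (False, j)) + (\<Sum>j\<in>A1. h (True, j))"
proof -
  have U: "{(c, j). if c then j \<in> A1 else j \<in> A0} = Pair False ` A0 \<union> Pair True ` A1" by auto
  have "(\<Sum>p\<in>Pair False ` A0 \<union> Pair True ` A1. h p) = (\<Sum>p\<in>Pair False ` A0. h p) + (\<Sum>p\<in>Pair True ` A1. h p)"
    by (rule sum.union_disjoint) (use assms in auto)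
  also have "\<dots> = (\<Sum>j\<in>A0. h (False, j)) + (\<Sum>j\<in>A1. h (True, j))"
    by (simp add: sum.reindex inj_on_def)
  finally show ?thesis unfolding U .
qed

lemma main_count:
  assumes "inv k b v0 v1" "t < T"
  shows "(\<Sum>l\<in>{l. l \<le> t \<and> dg T (v1 - v0) l}. cnt t k b l v0 v1 * 2 ^ (t - l)) \<le> 2 ^ T * Carry t k b v0 v1"
  using assms(1)
proof (induction k arbitrary: b v0 v1)
  case 0
  have "cnt t 0 b l v0 v1 = 0" if "l \<le> t" for l unfolding cnt_def using that by simp
  then show ?case by simp
next
  case (Suc k)
  define s where "s = spl k b"
  note st = inv_step[OF Suc.prems, folded s_def]
  note br = cnt_branch[OF Suc.prems, folded s_def]
  define V where "V = {l. l \<le> t \<and> dg T (v1 - v0) l}"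
  have finV: "finite V" unfolding V_def by auto
  note IH0 = Suc.IH[OF st(3)]
  note IH1 = Suc.IH[OF st(4)]
  have CS: "Carry t (Suc k) b v0 v1 = (if Kc T (s - v0) (v1 - s) t then 1 else 0)
      + Carry t k (b @ [False]) v0 s + Carry t k (b @ [True]) s v1"
    by (simp add: s_def)
  show ?case
  proof (cases "s = v1")
    case True
    have "(\<Sum>l\<in>V. cnt t (Suc k) b l v0 v1 * 2 ^ (t - l)) =
        (\<Sum>l\<in>{l. l \<le> t \<and> dg T (s - v0) l}. cnt t k (b @ [False]) l v0 s * 2 ^ (t - l))"
      unfolding V_def using br(1)[OF True] True by simp
    also have "\<dots> \<le> 2 ^ T * Carry t k (b @ [False]) v0 s" by (rule IH0)
    also have "\<dots> \<le> 2 ^ T * Carry t (Suc k) b v0 v1" unfolding CS by simp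
    finally show ?thesis unfolding V_def .
  next
    case n1: False
    show ?thesis
  proof (cases "s = v0")
    case True
    have "(\<Sum>l\<in>V. cnt t (Suc k) b l v0 v1 * 2 ^ (t - l)) =
        (\<Sum>l\<in>{l. l \<le> t \<and> dg T (v1 - s) l}. cnt t k (b @ [True]) l s v1 * 2 ^ (t - l))"
      unfolding V_def using br(2)[OF n1 True] True by simp
    also have "\<dots> \<le> 2 ^ T * Carry t k (b @ [True]) s v1" by (rule IH1)
    also have "\<dots> \<le> 2 ^ T * Carry t (Suc k) b v0 v1" unfolding CS by simp
    finally show ?thesis unfolding V_def .
  next
    case n2: False
    define x where "x = s - v0"
    define y where "y = v1 - s"
    have xy: "0 < x" "0 < y" "x + y = v1 - v0" "x + y \<le> 2 ^ T"
      using st(1,2) n1 n2 inv_top[OF Suc.prems] unfolding x_def y_def by auto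
    define det0 where "det0 l = (0 < l \<and> dg T x l \<and> \<not> dg T y l)" for l
    define det1 where "det1 l = (0 < l \<and> \<not> dg T x l \<and> dg T y l)" for l
    define h where "h p = cnt t k (b @ [fst p]) (snd p) (if fst p then s else v0) (if fst p then v1 else s)
        * 2 ^ (t - snd p)" for p
    define ch where "ch l = (if det0 l then {(False, l)} else if det1 l then {(True, l)}
        else {(c, j). l < j \<and> j \<le> t \<and> j \<le> Jf T x y l \<and> dg T (if c then y else x) j})" for l
    define Ex where "Ex l = (if \<not> det0 l \<and> \<not> det1 l \<and> t < Jf T x y l then 2 ^ T else (0::nat))" for l
    have Vz: "dg T (x + y) l" "l \<le> t" if "l \<in> V" for l using that unfolding V_def xy(3) by auto
    have Kl: "Kc T x y l" if "l \<in> V" "\<not> det0 l" "\<not> det1 l" for l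
      using carry_case[OF xy(1,2,4) Vz(1)[OF that(1)]] that(2,3) unfolding det0_def det1_def by blast
    have perl: "cnt t (Suc k) b l v0 v1 * 2 ^ (t - l) \<le> (\<Sum>p\<in>ch l. h p) + Ex l" if l: "l \<in> V" for l
    proof (cases "det0 l")
      case True
      then have "cnt t (Suc k) b l v0 v1 = cnt t k (b @ [False]) l v0 s"
        using br(3)[OF n1 n2] unfolding det0_def x_def y_def by blast
      then show ?thesis unfolding ch_def Ex_def h_def using True by simp
    next
      case nd0: False
      show ?thesis
      proof (cases "det1 l")
        case True
        then have "cnt t (Suc k) b l v0 v1 = cnt t k (b @ [True]) l s v1"
          using br(4)[OF n1 n2] nd0 unfolding det0_def det1_def x_def y_def by blast
        then show ?thesis unfolding ch_def Ex_def h_def using True nd0 by simp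
      next
        case nd1: False
        have "cnt t (Suc k) b l v0 v1 * 2 ^ (t - l) \<le>
          (\<Sum>p \<in> {(c, j). l < j \<and> j \<le> t \<and> j \<le> Jf T x y l \<and> dg T (if c then y else x) j}.
            cnt t k (b @ [fst p]) (snd p) (if fst p then s else v0) (if fst p then v1 else s) * 2 ^ (t - snd p))
           + (if t < Jf T x y l then 2 ^ T else 0)"
          by (rule carry_step[OF Suc.prems s_def x_def y_def n1 n2 _ _ Kl[OF l nd0 nd1] Vz(2)[OF l] assms(2)])
            (use nd0 nd1 in \<open>auto simp: det0_def det1_def\<close>)
        then show ?thesis unfolding ch_def Ex_def h_def using nd0 nd1 by simp
      qed
    qed
    define Vx where "Vx = {j. j \<le> t \<and> dg T x j}"
    define Vy where "Vy = {j. j \<le> t \<and> dg T y j}"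
    define U where "U = {(c, j). if c then j \<in> Vy else j \<in> Vx}"
    have finU: "finite Vx" "finite Vy" "finite U"
    proof -
      show "finite Vx" "finite Vy" unfolding Vx_def Vy_def by auto
      moreover have "U = Pair False ` Vx \<union> Pair True ` Vy" unfolding U_def by auto
      ultimately show "finite U" by simp
    qed
    have chU: "ch l \<subseteq> U" if "l \<in> V" for l
      using Vz(2)[OF that] unfolding ch_def U_def Vx_def Vy_def det0_def det1_def by auto
    have chf: "snd p = l" if "p \<in> ch l" "det0 l \<or> det1 l" for p l
      using that unfolding ch_def by (auto split: if_splits)
    have chc: "l < snd p \<and> snd p \<le> Jf T x y l" if "p \<in> ch l" "\<not> det0 l" "\<not> det1 l" for p l
      using that unfolding ch_def by auto
    have disj0: "ch l \<inter> ch l' = {}" if ll: "l \<in> V" "l' \<in> V" "l < l'" for l l'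
    proof (rule ccontr)
      assume "ch l \<inter> ch l' \<noteq> {}"
      then obtain p where p: "p \<in> ch l" "p \<in> ch l'" by auto
      show False
      proof (cases "det0 l \<or> det1 l")
        case True
        then have "snd p = l" using chf p(1) by blast
        moreover have "l' \<le> snd p"
        proof (cases "det0 l' \<or> det1 l'")
          case True then show ?thesis using chf p(2) by fastforce
        next
          case False then show ?thesis using chc[OF p(2)] by auto
        qed
        ultimately show False using ll by simp
      next
        case False
        then have K: "Kc T x y l" and c: "l < snd p" "snd p \<le> Jf T x y l"
          using Kl[OF ll(1)] chc[OF p(1)] by auto
        have l'p: "l' \<le> snd p"
        proof (cases "det0 l' \<or> det1 l'")
          case True then show ?thesis using chf p(2) by fastforce
        next
          case False then show ?thesis using chc[OF p(2)] by auto
        qed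
        have "\<not> l' < Jf T x y l" using zero_between[OF K ll(3)] Vz(1)[OF ll(2)] by blast
        then have eq: "l' = Jf T x y l" "snd p = l'" using l'p c by auto
        have bits: "dg T x l'" "dg T y l'" using Jf_props(2,3)[OF K] eq by auto
        show False
        proof (cases "det0 l' \<or> det1 l'")
          case True then show False using bits unfolding det0_def det1_def by auto
        next
          case False then show False using chc[OF p(2)] eq by auto
        qed
      qed
    qed
    have disj: "ch l \<inter> ch l' = {}" if "l \<in> V" "l' \<in> V" "l \<noteq> l'" for l l'
    proof (cases "l < l'")
      case True then show ?thesis using disj0 that by blast
    next
      case False then have "l' < l" using that(3) by simp
      then show ?thesis using disj0[OF that(2,1)] by blast
    qed
    define W where "W = {l \<in> V. \<not> det0 l \<and> \<not> det1 l \<and> t < Jf T x y l}"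
    have sumEx: "(\<Sum>l\<in>V. Ex l) = card W * 2 ^ T"
    proof -
      have "(\<Sum>l\<in>V. Ex l) = (\<Sum>l\<in>W. 2 ^ T)"
        unfolding W_def Ex_def by (rule sum.inter_filter[symmetric, OF finV])
      then show ?thesis by simp
    qed
    have W1: "card W * 2 ^ T \<le> 2 ^ T * (if Kc T x y t then 1 else 0)"
    proof (cases "W = {}")
      case True then show ?thesis by simp
    next
      case False
      then obtain l where l: "l \<in> W" by auto
      have lV: "l \<in> V" and nd: "\<not> det0 l" "\<not> det1 l" and tJ: "t < Jf T x y l" using l unfolding W_def by auto
      have Kt: "Kc T x y t"
      proof (cases "l = t")
        case True then show ?thesis using Kl[OF lV nd] by simp
      next
        case False
        then have "l < t" using Vz(2)[OF lV] by simp
        then show ?thesis using Jf_props(5)[OF Kl[OF lV nd] _ tJ] by simp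
      qed
      have finW: "finite W" unfolding W_def using finV by simp
      have "card W \<le> Suc 0"
      proof (subst card_le_Suc0_iff_eq[OF finW], intro ballI, rule ccontr)
        fix a c assume a: "a \<in> W" "c \<in> W" "a \<noteq> c"
        have ne: False if "a' \<in> W" "c' \<in> W" "a' < c'" for a' c'
        proof -
          have "a' \<in> V" "\<not> det0 a'" "\<not> det1 a'" "t < Jf T x y a'" "c' \<in> V"
            using that unfolding W_def by auto
          moreover have "c' \<le> t" using Vz(2) calculation(5) by blast
          ultimately show False using zero_between[OF Kl[of a'] that(3)] Vz(1)[of c'] by auto
        qed
        show False using a ne by (cases "a < c") (auto simp: not_less_iff_gr_or_eq)
      qed
      then show ?thesis using Kt by simp
    qed
    have "(\<Sum>l\<in>V. cnt t (Suc k) b l v0 v1 * 2 ^ (t - l)) \<le> (\<Sum>l\<in>V. (\<Sum>p\<in>ch l. h p) + Ex l)"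
      by (rule sum_mono) (rule perl)
    also have "\<dots> = (\<Sum>l\<in>V. \<Sum>p\<in>ch l. h p) + (\<Sum>l\<in>V. Ex l)"
      by (rule sum.distrib)
    also have "(\<Sum>l\<in>V. \<Sum>p\<in>ch l. h p) \<le> (\<Sum>p\<in>U. h p)"
      by (rule sum_disj_le[OF finV chU finU(3) disj])
    also have "(\<Sum>p\<in>U. h p) = (\<Sum>j\<in>Vx. h (False, j)) + (\<Sum>j\<in>Vy. h (True, j))"
      unfolding U_def by (rule sum_pairs[OF finU(1,2)])
    also have "(\<Sum>j\<in>Vx. h (False, j)) \<le> 2 ^ T * Carry t k (b @ [False]) v0 s"
      using IH0 unfolding Vx_def h_def x_def by simp
    also have "(\<Sum>j\<in>Vy. h (True, j)) \<le> 2 ^ T * Carry t k (b @ [True]) s v1"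
      using IH1 unfolding Vy_def h_def y_def by simp
    also have "(\<Sum>l\<in>V. Ex l) \<le> 2 ^ T * (if Kc T x y t then 1 else 0)"
      using sumEx W1 by simp
    finally show ?thesis unfolding V_def CS x_def y_def by (simp add: algebra_simps)
  qed
  qed
qed

end


lemma mod_carry:
  fixes x y M :: nat
  assumes "0 < M"
  shows "x mod M + y mod M = (x + y) mod M + (if M \<le> x mod M + y mod M then M else 0)"
proof -
  have a: "x mod M < M" "y mod M < M" using assms by auto
  have e: "(x + y) mod M = (x mod M + y mod M) mod M" by (simp add: mod_add_eq)
  show ?thesis
  proof (cases "M \<le> x mod M + y mod M")
    case True
    have "(x mod M + y mod M) mod M = x mod M + y mod M - M"
    proof -
      have "x mod M + y mod M - M < M" using a by linarith
      then show ?thesis using True by (simp add: le_mod_geq)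
    qed
    then show ?thesis using True e by simp
  next
    case False
    then show ?thesis using e by simp
  qed
qed

lemma leaf_bound:
  fixes v0 v1 r m :: nat
  assumes "v0 \<le> v1" "\<not> 2 ^ r dvd v0 \<Longrightarrow> v0 < 2 ^ (m + r)" "\<not> 2 ^ r dvd v1 \<Longrightarrow> v1 < 2 ^ (m + r)"
  shows "(v1 - v0) mod 2 ^ r \<le> min v1 (2 ^ (m + r)) - min v0 (2 ^ (m + r))"
proof -
  define B :: nat where "B = 2 ^ (m + r)"
  have Bd: "2 ^ r dvd B" unfolding B_def power_add by simp
  have a2: "\<not> 2 ^ r dvd v0 \<Longrightarrow> v0 < B" and a3: "\<not> 2 ^ r dvd v1 \<Longrightarrow> v1 < B"
    using assms(2,3) unfolding B_def by auto
  have "(v1 - v0) mod 2 ^ r \<le> min v1 B - min v0 B"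
  proof (cases "2 ^ r dvd v0 \<and> 2 ^ r dvd v1")
    case True
    then have "2 ^ r dvd (v1 - v0)" by (simp add: dvd_diff_nat)
    then have "(v1 - v0) mod 2 ^ r = 0" by simp
    then show ?thesis by simp
  next
    case False
    have v0B: "v0 < B"
    proof (cases "2 ^ r dvd v0")
      case True
      then have "v1 < B" using False a3 by blast
      then show ?thesis using assms(1) by simp
    next
      case False
      then show ?thesis using a2 by blast
    qed
    show ?thesis
    proof (cases "v1 < B")
      case True
      have "(v1 - v0) mod 2 ^ r \<le> v1 - v0" by (rule mod_less_eq_dividend)
      then show ?thesis using True v0B by simp
    next
      case nB: False
      have d1: "2 ^ r dvd v1" using a3 nB by blast
      have "2 ^ r dvd (v1 - B)" using d1 Bd by (rule dvd_diff_nat)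
      then obtain q where q: "v1 - B = 2 ^ r * q" by (rule dvdE)
      have "v1 - v0 = (B - v0) + 2 ^ r * q" using q nB v0B by simp
      then have "(v1 - v0) mod 2 ^ r = (B - v0) mod 2 ^ r" by simp
      also have "\<dots> \<le> B - v0" by (rule mod_less_eq_dividend)
      finally show ?thesis using nB v0B by simp
    qed
  qed
  then show ?thesis unfolding B_def .
qed

context omodel
begin

lemma carry_bound:
  assumes "inv k b v0 v1" "t \<le> T"
  shows "Carry t k b v0 v1 * 2 ^ (T - t) + (v1 - v0) mod 2 ^ (T - t)
         \<le> min v1 (2 ^ (m + (T - t))) - min v0 (2 ^ (m + (T - t)))"
  using assms(1)
proof (induction k arbitrary: b v0 v1)
  case 0
  have "T - t \<le> T" by simp
  then show ?case
    using leaf_bound[of v0 v1 "T - t" m] inv_le[OF 0] inv_P0[OF 0] inv_P1[OF 0] unfolding Pv_def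
    by simp
next
  case (Suc k)
  define s where "s = spl k b"
  define M :: nat where "M = 2 ^ (T - t)"
  define B :: nat where "B = 2 ^ (m + (T - t))"
  note st = inv_step[OF Suc.prems, folded s_def]
  have IH0: "Carry t k (b @ [False]) v0 s * M + (s - v0) mod M \<le> min s B - min v0 B"
    using Suc.IH[OF st(3)] unfolding M_def B_def .
  have IH1: "Carry t k (b @ [True]) s v1 * M + (v1 - s) mod M \<le> min v1 B - min s B"
    using Suc.IH[OF st(4)] unfolding M_def B_def .
  have mc: "(s - v0) mod M + (v1 - s) mod M = (v1 - v0) mod M + (if Kc T (s - v0) (v1 - s) t then M else 0)"
    using mod_carry[of M "s - v0" "v1 - s"] st(1,2) unfolding Kc_def M_def by simp
  have mono: "min v0 B \<le> min s B" "min s B \<le> min v1 B" using st(1,2) by auto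
  have "Carry t (Suc k) b v0 v1 * M + (v1 - v0) mod M =
      (Carry t k (b @ [False]) v0 s * M + (s - v0) mod M) + (Carry t k (b @ [True]) s v1 * M + (v1 - s) mod M)"
    using mc by (simp add: s_def[symmetric] algebra_simps)
  also have "\<dots> \<le> (min s B - min v0 B) + (min v1 B - min s B)"
    using IH0 IH1 by simp
  also have "\<dots> = min v1 B - min v0 B" using mono by simp
  finally show ?case unfolding M_def B_def .
qed

end


definition cyl :: "nat \<Rightarrow> nat set \<Rightarrow> (nat \<Rightarrow> bool) set" where
  "cyl T S = {\<omega>. \<forall>i<T. \<omega> i = (i \<in> S)}"

lemma cyl_eq: "cyl T S = prod_emb UNIV (\<lambda>_. measure_pmf (bernoulli_pmf (1/2))) {..<T}
     (Pi\<^sub>E {..<T} (\<lambda>i. {i \<in> S}))"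
proof -
  have "(\<Pi>\<^sub>E i\<in>(UNIV::nat set). space (measure_pmf (bernoulli_pmf (1/2)))) = UNIV"
    by (simp add: PiE_UNIV_domain)
  moreover have "(\<lambda>x. restrict x {..<T}) -` (Pi\<^sub>E {..<T} (\<lambda>i. {i \<in> S})) = cyl T S"
    unfolding cyl_def by (auto simp: PiE_def Pi_def restrict_def extensional_def)
  ultimately show ?thesis unfolding prod_emb_def by simp
qed

lemma cyl_sets: "cyl T S \<in> sets coins"
  unfolding cyl_eq coins_def
  by (rule sets_PiM_I) auto

lemma cyl_measure: "emeasure coins (cyl T S) = ennreal ((1/2) ^ T)"
proof -
  have "emeasure coins (cyl T S) = (\<Prod>i\<in>{..<T}. emeasure (measure_pmf (bernoulli_pmf (1/2))) {i \<in> S})"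
    unfolding cyl_eq coins_def
    by (rule emeasure_PiM_emb) (auto simp: prob_space_measure_pmf)
  also have "\<dots> = (\<Prod>i\<in>{..<T}. ennreal (1/2))"
    by (intro prod.cong refl) (simp add: emeasure_pmf_single)
  also have "\<dots> = ennreal ((1/2) ^ T)" by (subst prod_ennreal) auto
  finally show ?thesis .
qed

lemma nn_integral_coins_finite:
  fixes f :: "(nat \<Rightarrow> bool) \<Rightarrow> ennreal"
  assumes loc: "\<And>\<omega>. f \<omega> = f (\<lambda>i. i \<in> {j. j < T \<and> \<omega> j})"
  shows "(\<integral>\<^sup>+\<omega>. f \<omega> \<partial>coins) = (\<Sum>S\<in>Pow {..<T}. f (\<lambda>i. i \<in> S)) * ennreal ((1/2) ^ T)"
proof -
  have eq: "f \<omega> = (\<Sum>S\<in>Pow {..<T}. f (\<lambda>i. i \<in> S) * indicator (cyl T S) \<omega>)" for \<omega>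
  proof -
    let ?S0 = "{j. j < T \<and> \<omega> j}"
    have S0: "?S0 \<in> Pow {..<T}" by auto
    have "(\<Sum>S\<in>Pow {..<T}. f (\<lambda>i. i \<in> S) * indicator (cyl T S) \<omega>)
        = f (\<lambda>i. i \<in> ?S0) * indicator (cyl T ?S0) \<omega>"
    proof (rule sum.remove[OF _ S0, THEN trans])
      show "finite (Pow {..<T::nat})" by simp
      have "(\<Sum>S\<in>Pow {..<T} - {?S0}. f (\<lambda>i. i \<in> S) * indicator (cyl T S) \<omega>) = 0"
      proof (intro sum.neutral ballI)
        fix S assume "S \<in> Pow {..<T} - {?S0}"
        then have "S \<noteq> ?S0" "S \<subseteq> {..<T}" by auto
        then have "\<omega> \<notin> cyl T S" unfolding cyl_def by auto
        then show "f (\<lambda>i. i \<in> S) * indicator (cyl T S) \<omega> = 0" by simp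
      qed
      then show "f (\<lambda>i. i \<in> ?S0) * indicator (cyl T ?S0) \<omega> +
          (\<Sum>S\<in>Pow {..<T} - {?S0}. f (\<lambda>i. i \<in> S) * indicator (cyl T S) \<omega>) =
          f (\<lambda>i. i \<in> ?S0) * indicator (cyl T ?S0) \<omega>" by simp
    qed
    also have "\<dots> = f (\<lambda>i. i \<in> ?S0)" by (simp add: cyl_def)
    finally show ?thesis using loc[of \<omega>] by simp
  qed
  have "(\<integral>\<^sup>+\<omega>. f \<omega> \<partial>coins) = (\<integral>\<^sup>+\<omega>. (\<Sum>S\<in>Pow {..<T}. f (\<lambda>i. i \<in> S) * indicator (cyl T S) \<omega>) \<partial>coins)"
    by (subst eq) (rule refl)
  also have "\<dots> = (\<Sum>S\<in>Pow {..<T}. (\<integral>\<^sup>+\<omega>. f (\<lambda>i. i \<in> S) * indicator (cyl T S) \<omega> \<partial>coins))"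
    by (rule nn_integral_sum) (auto intro!: borel_measurable_times_ennreal borel_measurable_indicator cyl_sets)
  also have "\<dots> = (\<Sum>S\<in>Pow {..<T}. f (\<lambda>i. i \<in> S) * ennreal ((1/2) ^ T))"
    by (intro sum.cong refl) (simp add: nn_integral_cmult_indicator cyl_sets cyl_measure)
  also have "\<dots> = (\<Sum>S\<in>Pow {..<T}. f (\<lambda>i. i \<in> S)) * ennreal ((1/2) ^ T)"
    by (simp add: sum_distrib_right)
  finally show ?thesis .
qed



lemma double_count:
  fixes e :: "'a \<Rightarrow> nat"
  assumes "finite A" "\<And>S. S \<in> A \<Longrightarrow> e S \<le> T"
  shows "(\<Sum>S\<in>A. e S) = (\<Sum>t<T. card {S \<in> A. t < e S})"
proof -
  have "(\<Sum>S\<in>A. e S) = (\<Sum>S\<in>A. \<Sum>t<T. (if t < e S then 1 else 0))"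
  proof (rule sum.cong[OF refl])
    fix S assume "S \<in> A"
    then have "e S \<le> T" by (rule assms(2))
    then have "{t. t < T \<and> t < e S} = {..<e S}" by auto
    then have "(\<Sum>t<T. (if t < e S then 1 else 0)) = card {..<e S}"
      by (simp add: sum.If_cases[of "{..<T}"] Int_def)
    then show "e S = (\<Sum>t<T. (if t < e S then 1 else 0))" by simp
  qed
  also have "\<dots> = (\<Sum>t<T. \<Sum>S\<in>A. (if t < e S then 1 else 0))"
    by (rule sum.swap)
  also have "\<dots> = (\<Sum>t<T. card {S \<in> A. t < e S})"
  proof (rule sum.cong[OF refl])
    fix t
    show "(\<Sum>S\<in>A. (if t < e S then 1 else 0)) = card {S \<in> A. t < e S}"
      using assms(1) by (simp add: sum.If_cases Int_def)
  qed
  finally show ?thesis .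
qed

lemma geo_bound:
  fixes m d :: nat
  shows "(\<Sum>t<m + d. min 1 ((2::real) ^ m / 2 ^ t)) = real m + 2 - 2 ^ (m + 1) / 2 ^ (m + d)"
proof (induction d)
  case 0
  have "(\<Sum>t<m. min 1 ((2::real) ^ m / 2 ^ t)) = (\<Sum>t<m. 1)"
  proof (rule sum.cong[OF refl])
    fix t assume "t \<in> {..<m}"
    then have "(2::real) ^ t \<le> 2 ^ m" by (intro power_increasing) auto
    then show "min 1 ((2::real) ^ m / 2 ^ t) = 1" by (simp add: min_def field_simps)
  qed
  then show ?case by simp
next
  case (Suc d)
  have "(2::real) ^ m \<le> 2 ^ (m + d)" by (intro power_increasing) auto
  then have mn: "min 1 ((2::real) ^ m / 2 ^ (m + d)) = 2 ^ m / 2 ^ (m + d)"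
    by (simp add: min_def field_simps)
  have "(\<Sum>t<m + Suc d. min 1 ((2::real) ^ m / 2 ^ t)) =
      (\<Sum>t<m + d. min 1 ((2::real) ^ m / 2 ^ t)) + min 1 (2 ^ m / 2 ^ (m + d))"
    by simp
  also have "\<dots> = real m + 2 - 2 ^ (m + 1) / 2 ^ (m + d) + 2 ^ m / 2 ^ (m + d)"
    using Suc.IH mn by simp
  also have "\<dots> = real m + 2 - 2 ^ (m + 1) / 2 ^ (m + Suc d)"
    by (simp add: field_simps)
  finally show ?case .
qed

context omodel
begin

lemma root_inv: "inv n [] 0 (2 ^ T)"
  unfolding inv_def Pv_def using G_top by simp

lemma root_valid: "{l. l \<le> t \<and> dg T (2 ^ T - 0) l} = {0}"
proof -
  have "dg T (2 ^ T) l = (l = 0)" if "l \<le> t" for l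
  proof (cases "l = 0")
    case True then show ?thesis by (simp add: dg_def)
  next
    case False
    show ?thesis
    proof (cases "l \<le> T")
      case True
      have p: "(2::nat) ^ T = 2 ^ l * 2 ^ (T - l)"
        using True by (simp flip: power_add)
      have "(2::nat) ^ T div 2 ^ (T - l) = 2 ^ l"
        unfolding p by simp
      then show ?thesis using False True by (simp add: dg_def)
    next
      case False
      then show ?thesis by (simp add: dg_def)
    qed
  qed
  then show ?thesis by auto
qed

lemma cnt_root:
  assumes "t < T"
  shows "cnt t n [] 0 0 (2 ^ T) * 2 ^ t \<le> 2 ^ T * 2 ^ m"
proof -
  have "cnt t n [] 0 0 (2 ^ T) * 2 ^ t \<le> 2 ^ T * Carry t n [] 0 (2 ^ T)"
    using main_count[OF root_inv assms] unfolding root_valid by simp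
  moreover have "Carry t n [] 0 (2 ^ T) \<le> 2 ^ m"
  proof -
    have "Carry t n [] 0 (2 ^ T) * 2 ^ (T - t) \<le> min (2 ^ T) (2 ^ (m + (T - t))) - min 0 (2 ^ (m + (T - t)))"
      using carry_bound[OF root_inv, of t] assms by simp
    also have "\<dots> \<le> 2 ^ m * 2 ^ (T - t)" by (simp add: power_add)
    finally show ?thesis by simp
  qed
  ultimately show ?thesis by (meson le_trans mult_le_mono2)
qed

lemma cnt_le: "cnt t k b l v0 v1 \<le> 2 ^ T"
proof -
  have "cnt t k b l v0 v1 \<le> card (Pow {..<T})"
    unfolding cnt_def by (rule card_mono) auto
  then show ?thesis by (simp add: card_Pow)
qed

lemma expected_le:
  assumes "m \<le> T"
  shows "(\<integral>\<^sup>+\<omega>. ennreal_of_enat (opt_bits \<phi> F \<omega> n [] 0 0 1) \<partial>coins)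
           \<le> ennreal (real m + 2 - 2 ^ (m + 1) / 2 ^ T)"
proof -
  define L where "L \<omega> = opt_bits \<phi> F \<omega> n [] 0 (real 0 / 2 ^ T) (real (2 ^ T) / 2 ^ T)" for \<omega>
  have L1: "opt_bits \<phi> F \<omega> n [] 0 0 1 = L \<omega>" for \<omega> unfolding L_def by simp
  have v0: "dg T (2 ^ T - 0) 0" by (simp add: dg_def)
  note oT = opt_T[OF root_inv v0]
  have loc: "L \<omega>' = L \<omega> \<and> L \<omega> \<le> enat T" if "\<forall>i<T. \<omega> i = \<omega>' i" for \<omega> \<omega>'
    using oT[OF that] unfolding L_def by simp
  have A: "(\<integral>\<^sup>+\<omega>. ennreal_of_enat (L \<omega>) \<partial>coins) =
      (\<Sum>S\<in>Pow {..<T}. ennreal_of_enat (L (\<lambda>i. i \<in> S))) * ennreal ((1/2) ^ T)"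
  proof (rule nn_integral_coins_finite)
    fix \<omega> :: "nat \<Rightarrow> bool"
    have "\<forall>i<T. \<omega> i = (i \<in> {j. j < T \<and> \<omega> j})" by auto
    from loc[OF this] show "ennreal_of_enat (L \<omega>) = ennreal_of_enat (L (\<lambda>i. i \<in> {j. j < T \<and> \<omega> j}))"
      by simp
  qed
  define e where "e S = the_enat (L (\<lambda>i. i \<in> S))" for S
  have eL: "L (\<lambda>i. i \<in> S) = enat (e S)" "e S \<le> T" for S
  proof -
    have "L (\<lambda>i. i \<in> S) \<le> enat T" using loc[of "\<lambda>i. i \<in> S" "\<lambda>i. i \<in> S"] by simp
    then obtain a where "L (\<lambda>i. i \<in> S) = enat a" "a \<le> T" by (cases "L (\<lambda>i. i \<in> S)") auto
    then show "L (\<lambda>i. i \<in> S) = enat (e S)" "e S \<le> T" unfolding e_def by auto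
  qed
  have cnte: "cnt t n [] 0 0 (2 ^ T) = card {S \<in> Pow {..<T}. t < e S}" for t
    unfolding cnt_def L_def[symmetric] eL(1) by simp
  have sumE: "(\<Sum>S\<in>Pow {..<T}. e S) = (\<Sum>t<T. cnt t n [] 0 0 (2 ^ T))"
    unfolding cnte by (rule double_count) (auto intro: eL(2))
  have sumL: "(\<Sum>S\<in>Pow {..<T}. ennreal_of_enat (L (\<lambda>i. i \<in> S))) = ennreal (real (\<Sum>t<T. cnt t n [] 0 0 (2 ^ T)))"
    unfolding eL(1) sumE[symmetric] by (simp add: ennreal_of_nat_eq_real_of_nat)
  have I: "(\<integral>\<^sup>+\<omega>. ennreal_of_enat (L \<omega>) \<partial>coins) =
       ennreal (real (\<Sum>t<T. cnt t n [] 0 0 (2 ^ T)) * (1/2) ^ T)"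
  proof -
    have "ennreal (real (\<Sum>t<T. cnt t n [] 0 0 (2 ^ T)) * (1/2) ^ T) =
        ennreal (real (\<Sum>t<T. cnt t n [] 0 0 (2 ^ T))) * ennreal ((1/2) ^ T)"
      by (rule ennreal_mult'') simp
    then show ?thesis unfolding A sumL by (rule sym)
  qed
  have "real (\<Sum>t<T. cnt t n [] 0 0 (2 ^ T)) * (1/2) ^ T = (\<Sum>t<T. real (cnt t n [] 0 0 (2 ^ T)) / 2 ^ T)"
  proof -
    have h: "(1/2::real) ^ T = 1 / 2 ^ T" by (rule power_one_over)
    show ?thesis unfolding h of_nat_sum by (simp add: sum_divide_distrib)
  qed
  also have "\<dots> \<le> (\<Sum>t<T. min 1 ((2::real) ^ m / 2 ^ t))"
  proof (rule sum_mono)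
    fix t assume t: "t \<in> {..<T}"
    have "real (cnt t n [] 0 0 (2 ^ T)) \<le> real ((2::nat) ^ T)"
      using cnt_le[of t n "[]" 0 0 "2 ^ T"] by (rule of_nat_mono)
    then have c1: "real (cnt t n [] 0 0 (2 ^ T)) \<le> 2 ^ T" by simp
    have "t < T" using t by simp
    have "real (cnt t n [] 0 0 (2 ^ T) * 2 ^ t) \<le> real ((2::nat) ^ T * 2 ^ m)"
      using cnt_root[OF \<open>t < T\<close>] by (rule of_nat_mono)
    then have c2: "real (cnt t n [] 0 0 (2 ^ T)) * 2 ^ t \<le> 2 ^ T * 2 ^ m" by simp
    have "real (cnt t n [] 0 0 (2 ^ T)) / 2 ^ T \<le> 1" using c1 by simp
    moreover have "real (cnt t n [] 0 0 (2 ^ T)) / 2 ^ T \<le> 2 ^ m / 2 ^ t"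
      using c2 by (simp add: field_simps)
    ultimately show "real (cnt t n [] 0 0 (2 ^ T)) / 2 ^ T \<le> min 1 ((2::real) ^ m / 2 ^ t)" by simp
  qed
  also have "\<dots> = real m + 2 - 2 ^ (m + 1) / 2 ^ T"
    using geo_bound[of m "T - m"] assms by simp
  finally have "real (\<Sum>t<T. cnt t n [] 0 0 (2 ^ T)) * (1/2) ^ T \<le> real m + 2 - 2 ^ (m + 1) / 2 ^ T" .
  then show ?thesis unfolding L1 I by (rule ennreal_leI)
qed

end


lemma fp_repr:
  assumes E: "E \<ge> 2" and x: "x \<in> fp_unit E m"
  defines "T \<equiv> m + 2 ^ (E - 1) - 2"
  shows "\<exists>V::nat. x = real V / 2 ^ T \<and> V \<le> 2 ^ T \<and> Pv m T V"
proof -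
  define bE :: nat where "bE = 2 ^ (E - 1)"
  have bE2: "2 \<le> bE"
  proof -
    have "(2::nat) ^ 1 \<le> 2 ^ (E - 1)" using E by (intro power_increasing) auto
    then show ?thesis unfolding bE_def by simp
  qed
  have Tdef: "T = m + bE - 2" unfolding T_def bE_def ..
  have rT: "real T = real m + real bE - 2" using bE2 unfolding Tdef by (simp add: of_nat_diff)
  have bias: "real_of_int (fp_bias E) = real bE - 1" unfolding fp_bias_def bE_def by simp
  have x01: "x \<le> 1" "x \<in> fp_nonneg E m" using x unfolding fp_unit_def by auto
  have p2T: "(2::real) ^ T = 2 powr real T" by (simp add: powr_realpow)
  have mT: "m \<le> T" using bE2 unfolding Tdef by simp
  from x01(2) consider (sub) f where "f < (2::nat) ^ m" "x = real f / 2 ^ m * 2 powr real_of_int (1 - fp_bias E)"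
    | (nor) e f where "1 \<le> e" "f < (2::nat) ^ m" "x = (1 + real f / 2 ^ m) * 2 powr real_of_int (int e - fp_bias E)"
    unfolding fp_nonneg_def by blast
  then show ?thesis
  proof cases
    case sub
    have "x * 2 ^ T = real f / 2 ^ m * (2 powr (real_of_int (1 - fp_bias E)) * 2 powr real T)"
      using sub(2) p2T by simp
    also have "2 powr (real_of_int (1 - fp_bias E)) * 2 powr real T = 2 powr real m"
      unfolding powr_add[symmetric] using bias rT by simp
    also have "real f / 2 ^ m * 2 powr real m = real f" by (simp add: powr_realpow)
    finally have xe: "x = real f / 2 ^ T" by (simp add: field_simps)
    have "(2::nat) ^ m \<le> 2 ^ T" using mT by (intro power_increasing) auto
    then have "f < 2 ^ T" using sub(1) by linarith
    moreover have "Pv m T f" unfolding Pv_def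
    proof (intro allI impI)
      fix r :: nat
      have "(2::nat) ^ m \<le> 2 ^ (m + r)" by (intro power_increasing) auto
      then show "f < 2 ^ (m + r)" using sub(1) by linarith
    qed
    ultimately show ?thesis using xe by (intro exI[of _ f]) auto
  next
    case nor
    define V :: nat where "V = (2 ^ m + f) * 2 ^ (e - 1)"
    have "x * 2 ^ T = (1 + real f / 2 ^ m) * (2 powr real_of_int (int e - fp_bias E) * 2 powr real T)"
      using nor(3) p2T by simp
    also have "2 powr real_of_int (int e - fp_bias E) * 2 powr real T = 2 powr real (m + (e - 1))"
    proof -
      have "real_of_int (int e - fp_bias E) + real T = real (m + (e - 1))"
        using bias rT nor(1) by (simp add: of_nat_diff)
      then show ?thesis unfolding powr_add[symmetric] by simp
    qed
    also have "\<dots> = 2 ^ (m + (e - 1))" by (rule powr_realpow) simp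
    also have "\<dots> = 2 ^ m * 2 ^ (e - 1)" by (rule power_add)
    also have "(1 + real f / 2 ^ m) * (2 ^ m * 2 ^ (e - 1)) = real V"
      unfolding V_def by (simp add: field_simps)
    finally have xV: "x = real V / 2 ^ T" by (simp add: field_simps)
    have rv: "real V = x * 2 ^ T" using xV by simp
    have "x * 2 ^ T \<le> 1 * 2 ^ T" using x01(1) by (intro mult_right_mono) auto
    then have "real V \<le> real ((2::nat) ^ T)" unfolding rv by simp
    then have VT: "V \<le> 2 ^ T" by (simp only: of_nat_le_iff)
    have "Pv m T V" unfolding Pv_def
    proof (intro allI impI)
      fix r assume r: "r \<le> T" "\<not> 2 ^ r dvd V"
      have "\<not> r \<le> e - 1"
      proof
        assume "r \<le> e - 1"
        then have "(2::nat) ^ r dvd 2 ^ (e - 1)" by (rule le_imp_power_dvd)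
        then show False using r(2) unfolding V_def by simp
      qed
      then have er: "e \<le> r" using nor(1) by simp
      have "V < 2 ^ (m + 1) * 2 ^ (e - 1)" unfolding V_def using nor(2) by simp
      also have "\<dots> = 2 ^ (m + 1 + (e - 1))" by (simp only: power_add)
      also have "\<dots> = 2 ^ (m + e)"
      proof -
        have "m + 1 + (e - 1) = m + e" using nor(1) by simp
        then show ?thesis by simp
      qed
      also have "\<dots> \<le> 2 ^ (m + r)" using er by (intro power_increasing) auto
      finally show "V < 2 ^ (m + r)" .
    qed
    then show ?thesis using xV VT by blast
  qed
qed

theorem theorem5p18:
  fixes E m n :: nat
    and \<gamma> :: "bool list \<Rightarrow> xreal"
    and \<phi> :: "bool list \<Rightarrow> bool list"
    and F :: "bool list \<Rightarrow> real"
  assumes "E \<ge> 2"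
    and "binary_number_format n \<gamma> \<phi>"
    and "fp_cdf E m n \<phi> F"
  shows "expected_bits n \<phi> F \<le> ennreal (real m + 2 - 2 powr (3 - 2 ^ (E - 1)))"
proof -
  define T where "T = m + 2 ^ (E - 1) - 2"
  have E2: "E \<ge> 2" by (rule assms(1))
  have bij: "bij_betw \<phi> (bitstrings n) (bitstrings n)"
    using assms(2) unfolding binary_number_format_def by blast
  have cdf1: "\<And>b. b \<in> bitstrings n \<Longrightarrow> F b \<in> fp_unit E m"
    and cdf2: "F (\<phi> (replicate n True)) = 1"
    and cdf3: "\<And>b b'. b \<in> bitstrings n \<Longrightarrow> b' \<in> bitstrings n \<Longrightarrow> fmt_less n \<phi> b b' \<Longrightarrow> F b \<le> F b'"
    using assms(3) unfolding fp_cdf_def by blast+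
  have phib: "\<phi> c \<in> bitstrings n" if "length c = n" for c
    using bij that unfolding bij_betw_def bitstrings_def by auto
  define G where "G c = (SOME V. F (\<phi> c) = real V / 2 ^ T \<and> V \<le> 2 ^ T \<and> Pv m T V)" for c
  have Gs: "F (\<phi> c) = real (G c) / 2 ^ T \<and> G c \<le> 2 ^ T \<and> Pv m T (G c)" if "length c = n" for c
  proof -
    have "\<exists>V::nat. F (\<phi> c) = real V / 2 ^ T \<and> V \<le> 2 ^ T \<and> Pv m T V"
      unfolding T_def by (rule fp_repr[OF E2 cdf1[OF phib[OF that]]])
    then show ?thesis unfolding G_def by (rule someI_ex)
  qed
  have Gmono: "G c \<le> G c'" if "length c = n" "length c' = n" "dict_less c c'" for c c'
  proof -
    have inj: "inj_on \<phi> (bitstrings n)" using bij by (rule bij_betw_imp_inj_on)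
    have cb: "c \<in> bitstrings n" "c' \<in> bitstrings n" using that unfolding bitstrings_def by auto
    have "fmt_less n \<phi> (\<phi> c) (\<phi> c')"
      unfolding fmt_less_def using inv_into_f_f[OF inj cb(1)] inv_into_f_f[OF inj cb(2)] that(3) by simp
    then have "F (\<phi> c) \<le> F (\<phi> c')" using cdf3 phib that(1,2) by blast
    then have "real (G c) / 2 ^ T \<le> real (G c') / 2 ^ T" using Gs that(1,2) by simp
    then have "real (G c) \<le> real (G c')" by (simp add: divide_le_cancel)
    then show ?thesis by simp
  qed
  have Gtop: "G (replicate n True) = 2 ^ T"
  proof -
    have "real (G (replicate n True)) / 2 ^ T = 1" using Gs[of "replicate n True"] cdf2 by simp
    then have "real (G (replicate n True)) = real ((2::nat) ^ T)" by (simp add: field_simps)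
    then show ?thesis by (simp only: of_nat_eq_iff)
  qed
  interpret om: omodel \<phi> F n T m G
    by unfold_locales (use Gs Gmono Gtop in auto)
  have bE: "(2::nat) \<le> 2 ^ (E - 1)"
  proof -
    have "(2::nat) ^ 1 \<le> 2 ^ (E - 1)" using E2 by (intro power_increasing) auto
    then show ?thesis by simp
  qed
  have mT: "m \<le> T" unfolding T_def using bE by simp
  have main: "expected_bits n \<phi> F \<le> ennreal (real m + 2 - 2 ^ (m + 1) / 2 ^ T)"
    unfolding expected_bits_def by (rule om.expected_le[OF mT])
  have rT: "real T = real m + 2 ^ (E - 1) - 2"
    unfolding T_def using bE by (simp add: of_nat_diff)
  have p1: "(2::real) powr (real (m + 1)) = 2 ^ (m + 1)" by (rule powr_realpow) simp
  have p2: "(2::real) powr (real T) = 2 ^ T" by (rule powr_realpow) simp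
  have "(2::real) ^ (m + 1) / 2 ^ T = 2 powr (real (m + 1)) / 2 powr (real T)"
    unfolding p1 p2 ..
  also have "\<dots> = 2 powr (real (m + 1) - real T)" by (simp add: powr_diff)
  also have "real (m + 1) - real T = 3 - 2 ^ (E - 1)" using rT by simp
  finally have eq: "(2::real) ^ (m + 1) / 2 ^ T = 2 powr (3 - 2 ^ (E - 1))" .
  show ?thesis using main unfolding eq .
qed


end
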